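(* Let $A\in\mathbb{C}^{N\times N}$ be nonsingular with Jordan decomposition $A=VJV^{-1}$, $V=[v_1,\ldots,v_N]$, $J=\mathrm{diag}\{J_{N_1}(\lambda_1),\ldots,J_{N_d}(\lambda_d)\}$, where $J_{N_i}(\lambda_i)$ is an $N_i\times N_i$ Jordan block. Let $\Gamma$ be a positively oriented simple closed curve in $\mathbb{C}$ passing through no eigenvalue of $A$, such that (after reordering blocks) $\lambda_1,\ldots,\lambda_k$ lie in the interior of $\Gamma$ and $\lambda_{k+1},\ldots,\lambda_d$ lie in its exterior, with $1\le k<d$. Let $s=N_1+\cdots+N_k$ and $$P_\Gamma=\frac{1}{2\pi\sqrt{-1}}\oint_\Gamma (zI-A)^{-1}\,dz .$$ Let $Y\in\mathbb{C}^{N\times s}$ be a random matrix whose entries are independent with a distribution absolutely continuous with respect to Lebesgue measure (e.g. Gaussian), and set $Z=P_\Gamma Y=\frac{1}{2\pi\sqrt{-1}}\oint_\Gamma (zI-A)^{-1}Y\,dz$. Then almost surely $Z$ has rank $s$, $Z^HAZ$ is invertible, and for $P=I-AZ(Z^HAZ)^{-1}Z^H$ the spectrum of $PA$ (with algebraic multiplicities) consists of the eigenvalue $0$ with multiplicity $s$ together with the eigenvalues of $A$ lying outside $\Gamma$, i.e. $\lambda_{k+1},\ldots,\lambda_d$ with multiplicities $N_{k+1},\ldots,N_d$ (the eigenvalues $\lambda_1,\ldots,\lambda_k$ inside $\Gamma$ are removed).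
   Context: $Z^H$ denotes the conjugate transpose of $Z$ and $I$ the $N\times N$ identity matrix. The eigenvalues $\lambda_i$ in $J$ need not be distinct. *)

theory Defs
  imports "HOL-Probability.Probability"
    "Jordan_Normal_Form.Jordan_Normal_Form"
    "Jordan_Normal_Form.Schur_Decomposition"
    "Jordan_Normal_Form.DL_Rank"
begin

definition mat_inv :: "complex mat \<Rightarrow> complex mat" where
  "mat_inv M = (THE B. B \<in> carrier_mat (dim_row M) (dim_row M) \<and>
                       inverts_mat M B \<and> inverts_mat B M)"

definition cint :: "(real \<Rightarrow> complex) \<Rightarrow> (complex \<Rightarrow> complex) \<Rightarrow> complex" where
  "cint g f = integral {0..1} (\<lambda>t. f (g t) * vector_derivative g (at t))"

text \<open>A positively oriented simple closed (piecewise smooth) curve: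
  winding number 1 around every point of its interior.\<close>
definition pos_simple_closed_curve :: "(real \<Rightarrow> complex) \<Rightarrow> bool" where
  "pos_simple_closed_curve g \<longleftrightarrow> valid_path g \<and> simple_path g \<and>
     pathfinish g = pathstart g \<and>
     (\<forall>w \<in> inside (path_image g). cint g (\<lambda>z. 1 / (z - w)) = 2 * pi * \<i>)"

definition riesz_proj :: "(real \<Rightarrow> complex) \<Rightarrow> nat \<Rightarrow> complex mat \<Rightarrow> complex mat" where
  "riesz_proj g N A = mat N N (\<lambda>(i,j).
      (1 / (2 * pi * \<i>)) * cint g (\<lambda>z. mat_inv (z \<cdot>\<^sub>m 1\<^sub>m N - A) $$ (i,j)))"

end

theory Submission
  imports Defs "HOL-Complex_Analysis.Complex_Analysis"
begin


lemma cint_eq: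
  assumes vp: "valid_path g" and h: "(f has_contour_integral i) g"
  shows "cint g f = i"
proof -
  from vp obtain S where S: "finite S" and C1: "g C1_differentiable_on {0..1} - S"
    unfolding valid_path_def piecewise_C1_differentiable_on_def by auto
  from C1 obtain D where D: "\<And>x. x \<in> {0..1} - S \<Longrightarrow> (g has_vector_derivative D x) (at x)"
    unfolding C1_differentiable_on_def by blast
  have "((\<lambda>t. f (g t) * vector_derivative g (at t)) has_integral i) {0..1}"
  proof (rule has_integral_spike_finite[OF S _ h[unfolded has_contour_integral_def]])
    fix x assume x: "x \<in> {0..1} - S"
    then have "vector_derivative g (at x) = D x" "vector_derivative g (at x within {0..1}) = D x"
      using D[OF x] by (auto intro: vector_derivative_at vector_derivative_at_within_ivl)
    then show "f (g x) * vector_derivative g (at x) = f (g x) * vector_derivative g (at x within {0..1})"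
      by simp
  qed
  then show ?thesis unfolding cint_def by (rule integral_unique)
qed

lemma pow_deriv:
  fixes x w :: complex
  assumes "x \<noteq> w" "m > 0"
  shows "((\<lambda>z. - (1 / of_nat m) * (1 / (z - w)) ^ m) has_field_derivative (1 / (x - w)) ^ Suc m) (at x within S)"
proof -
  have "((\<lambda>z. - (1 / of_nat m) * (1 / (z - w)) ^ m) has_field_derivative
     - (1 / of_nat m) * (of_nat m * (1 / (x - w)) ^ (m - 1) * (- 1 / (x - w)^2))) (at x within S)"
    using assms by (auto intro!: derivative_eq_intros simp: power2_eq_square)
  moreover have "- (1 / of_nat m) * (of_nat m * (1 / (x - w)) ^ (m - 1) * (- 1 / (x - w)^2)) = (1 / (x - w)) ^ Suc m"
  proof -
    have k: "\<And>k. (1 + of_nat k :: complex) \<noteq> 0" by (metis of_nat_Suc of_nat_neq_0)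
    show ?thesis using assms k by (cases m) (auto simp: field_simps power2_eq_square)
  qed
  ultimately show ?thesis by simp
qed

lemma pow_contour:
  assumes vp: "valid_path g" and cl: "pathfinish g = pathstart g" and w: "w \<notin> path_image g"
  shows "((\<lambda>z. (1 / (z - w)) ^ Suc m) has_contour_integral
           (if m = 0 then complex_of_real (2 * pi) * \<i> * winding_number g w else 0)) g"
proof (cases "m = 0")
  case True
  then show ?thesis using has_contour_integral_winding_number[OF vp w] by simp
next
  case False
  have "((\<lambda>z. (1 / (z - w)) ^ Suc m) has_contour_integral 0) g"
  proof (rule Cauchy_theorem_primitive[where S = "- {w}" and f = "\<lambda>z. - (1 / of_nat m) * (1 / (z - w)) ^ m"])
    fix x assume "x \<in> - {w}"
    then show "((\<lambda>z. - (1 / of_nat m) * (1 / (z - w)) ^ m) has_field_derivative (1 / (x - w)) ^ Suc m) (at x within - {w})"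
      using False by (intro pow_deriv) auto
  qed (use w vp cl in auto)
  then show ?thesis using False by simp
qed


lemma jordan_struct:
  assumes "k < sum_list (map fst n_as)" "l < sum_list (map fst n_as)"
    and "jordan_matrix n_as $$ (k,l) \<noteq> (0 :: 'a :: {zero,one})"
  shows "jordan_matrix n_as $$ (k,k) = jordan_matrix n_as $$ (l,l) \<and> k \<le> l"
  using assms
proof (induct n_as arbitrary: k l)
  case Nil
  then show ?case by simp
next
  case (Cons na n_as)
  obtain n a where na: "na = (n,a)" by force
  let ?m = "sum_list (map fst n_as)"
  have kl: "k < n + ?m" "l < n + ?m" using Cons(2,3) na by auto
  have e: "\<And>i j. i < n + ?m \<Longrightarrow> j < n + ?m \<Longrightarrow> jordan_matrix (na # n_as) $$ (i,j) =
     (if i < n then if j < n then jordan_block n a $$ (i,j) else 0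
      else if j < n then 0 else jordan_matrix n_as $$ (i - n, j - n))"
    unfolding na jordan_matrix_Cons by (subst index_mat_four_block) auto
  show ?case
  proof (cases "k < n")
    case True
    have ln: "l < n"
    proof (rule ccontr)
      assume "\<not> l < n" then show False using Cons(4) True e[OF kl] by simp
    qed
    have "jordan_block n a $$ (k,l) \<noteq> 0" using Cons(4) True ln e[OF kl] by simp
    then have "k = l \<or> Suc k = l" using True ln by (simp add: jordan_block_index split: if_splits)
    moreover have "jordan_matrix (na # n_as) $$ (k, k) = a" using True e[OF kl(1) kl(1)] by (simp add: jordan_block_index)
    moreover have "jordan_matrix (na # n_as) $$ (l, l) = a" using ln e[OF kl(2) kl(2)] by (simp add: jordan_block_index)
    ultimately show ?thesis by auto
  next
    case False
    have ln: "\<not> l < n"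
    proof
      assume "l < n" then show False using Cons(4) False e[OF kl] by simp
    qed
    have "jordan_matrix n_as $$ (k - n, l - n) \<noteq> 0" using Cons(4) False ln e[OF kl] by simp
    moreover have "k - n < ?m" "l - n < ?m" using kl False ln by auto
    ultimately have "jordan_matrix n_as $$ (k - n, k - n) = jordan_matrix n_as $$ (l - n, l - n) \<and> k - n \<le> l - n"
      using Cons(1) by blast
    then show ?thesis using False ln e[OF kl(1) kl(1)] e[OF kl(2) kl(2)] by auto
  qed
qed

lemma jordan_diag:
  "diag_mat (jordan_matrix n_as) = concat (map (\<lambda>(n,a). replicate n a) n_as)"
proof (induct n_as)
  case Nil
  then show ?case by (simp add: jordan_matrix_def diag_mat_def)
next
  case (Cons na n_as)
  obtain n a where na: "na = (n,a)" by force
  have "diag_mat (jordan_block n a) = replicate n a"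
    by (rule nth_equalityI) (auto simp: diag_mat_def jordan_block_index)
  then show ?case unfolding na jordan_matrix_Cons
    by (subst diag_four_block_mat[of _ n _ "sum_list (map fst n_as)"]) (auto simp: Cons)
qed


definition nilp :: "complex mat \<Rightarrow> complex mat" where
  "nilp J = mat (dim_row J) (dim_row J) (\<lambda>(i,j). if i = j then 0 else J $$ (i,j))"

definition res :: "complex mat \<Rightarrow> complex \<Rightarrow> complex mat" where
  "res J z = mat (dim_row J) (dim_row J) (\<lambda>(k,l).
      \<Sum>m<dim_row J. (nilp J ^\<^sub>m m) $$ (k,l) * (1 / (z - J $$ (k,k))) ^ Suc m)"

definition jstruct :: "complex mat \<Rightarrow> nat \<Rightarrow> bool" where
  "jstruct J N \<longleftrightarrow> J \<in> carrier_mat N N \<and>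
     (\<forall>k l. k < N \<longrightarrow> l < N \<longrightarrow> J $$ (k,l) \<noteq> 0 \<longrightarrow> J $$ (k,k) = J $$ (l,l) \<and> k \<le> l)"

lemma nilp_carrier: "J \<in> carrier_mat N N \<Longrightarrow> nilp J \<in> carrier_mat N N"
  unfolding nilp_def by auto

lemma nilp_pow:
  assumes js: "jstruct J N"
  shows "k < N \<Longrightarrow> l < N \<Longrightarrow> (nilp J ^\<^sub>m m) $$ (k,l) \<noteq> 0 \<Longrightarrow> k + m \<le> l \<and> J $$ (k,k) = J $$ (l,l)"
proof (induct m arbitrary: l)
  case 0
  have J: "J \<in> carrier_mat N N" using js unfolding jstruct_def by auto
  then show ?case using 0 nilp_carrier[OF J] by (auto split: if_splits)
next
  case (Suc m)
  have J: "J \<in> carrier_mat N N" using js unfolding jstruct_def by auto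
  note NC = nilp_carrier[OF J]
  have "(nilp J ^\<^sub>m Suc m) $$ (k,l) = (\<Sum>r\<in>{0..<N}. (nilp J ^\<^sub>m m) $$ (k,r) * nilp J $$ (r,l))"
    using Suc(2,3) NC by (simp add: scalar_prod_def)
  with Suc(4) obtain r where r: "r < N" "(nilp J ^\<^sub>m m) $$ (k,r) * nilp J $$ (r,l) \<noteq> 0"
    by (metis (no_types, lifting) atLeastLessThan_iff sum.neutral)
  then have a: "(nilp J ^\<^sub>m m) $$ (k,r) \<noteq> 0" and b: "nilp J $$ (r,l) \<noteq> 0" by auto
  from Suc(1)[OF Suc(2) r(1) a] have "k + m \<le> r \<and> J $$ (k,k) = J $$ (r,r)" .
  moreover from b have "r \<noteq> l" "J $$ (r,l) \<noteq> 0" using r(1) Suc(3) J unfolding nilp_def by (auto split: if_splits)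
  then have "J $$ (r,r) = J $$ (l,l) \<and> r < l" using js r(1) Suc(3) unfolding jstruct_def by force
  ultimately show ?case by auto
qed

lemma nilp_pow_N:
  assumes js: "jstruct J N" "k < N" "l < N"
  shows "(nilp J ^\<^sub>m N) $$ (k,l) = 0"
proof (rule ccontr)
  assume "(nilp J ^\<^sub>m N) $$ (k,l) \<noteq> 0"
  from nilp_pow[OF js this] js(3) show False by auto
qed

lemma res_inv:
  assumes js: "jstruct J N" and z: "\<And>i. i < N \<Longrightarrow> z \<noteq> J $$ (i,i)"
  shows "res J z * (z \<cdot>\<^sub>m 1\<^sub>m N - J) = 1\<^sub>m N"
proof -
  have J: "J \<in> carrier_mat N N" using js unfolding jstruct_def by auto
  note NC = nilp_carrier[OF J]
  define P where "P m = nilp J ^\<^sub>m m" for m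
  have PC: "P m \<in> carrier_mat N N" for m unfolding P_def using NC by auto
  have PS: "P (Suc m) $$ (i,l) = (\<Sum>k\<in>{0..<N}. P m $$ (i,k) * nilp J $$ (k,l))" if "i < N" "l < N" for m i l
    using that NC unfolding P_def by (simp add: scalar_prod_def)
  have Pd: "P m $$ (i,l) * J $$ (l,l) = P m $$ (i,l) * J $$ (i,i)" if "i < N" "l < N" for m i l
    using nilp_pow[OF js that, of m] unfolding P_def by (cases "P m $$ (i,l) = 0") (auto simp: P_def)
  show ?thesis
  proof (rule eq_matI)
    fix i l assume i: "i < dim_row (1\<^sub>m N :: complex mat)" and l: "l < dim_col (1\<^sub>m N :: complex mat)"
    then have i: "i < N" and l: "l < N" by auto
    define d where "d = 1 / (z - J $$ (i,i))"
    have zd: "(z - J $$ (i,i)) * d = 1" using z[OF i] unfolding d_def by auto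
    have R: "res J z $$ (i,k) = (\<Sum>m<N. P m $$ (i,k) * d ^ Suc m)" if "k < N" for k
      using i that J unfolding res_def P_def d_def by auto
    have "(res J z * (z \<cdot>\<^sub>m 1\<^sub>m N - J)) $$ (i,l) =
       (\<Sum>k\<in>{0..<N}. res J z $$ (i,k) * ((if k = l then z else 0) - J $$ (k,l)))"
      using i l J unfolding res_def by (simp add: scalar_prod_def) (auto intro!: sum.cong)
    also have "\<dots> = z * res J z $$ (i,l) - (\<Sum>k\<in>{0..<N}. res J z $$ (i,k) * J $$ (k,l))"
    proof -
      have "\<And>k. res J z $$ (i,k) * ((if k = l then z else 0) - J $$ (k,l)) =
          (if k = l then z * res J z $$ (i,l) else 0) - res J z $$ (i,k) * J $$ (k,l)"
        by (auto simp: algebra_simps)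
      then show ?thesis using l by (simp add: sum_subtractf)
    qed
    also have "(\<Sum>k\<in>{0..<N}. res J z $$ (i,k) * J $$ (k,l)) =
        (\<Sum>m<N. d ^ Suc m * (\<Sum>k\<in>{0..<N}. P m $$ (i,k) * J $$ (k,l)))"
    proof -
      have "(\<Sum>k\<in>{0..<N}. res J z $$ (i,k) * J $$ (k,l)) =
          (\<Sum>k\<in>{0..<N}. \<Sum>m<N. d ^ Suc m * (P m $$ (i,k) * J $$ (k,l)))"
        using R by (auto simp: sum_distrib_right mult.assoc mult.left_commute intro!: sum.cong)
      also have "\<dots> = (\<Sum>m<N. \<Sum>k\<in>{0..<N}. d ^ Suc m * (P m $$ (i,k) * J $$ (k,l)))"
        by (rule sum.swap)
      finally show ?thesis by (simp add: sum_distrib_left)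
    qed
    also have "\<dots> = (\<Sum>m<N. d ^ Suc m * (P (Suc m) $$ (i,l) + P m $$ (i,l) * J $$ (i,i)))"
    proof (rule sum.cong[OF refl])
      fix m
      have Jsplit: "J $$ (k,l) = nilp J $$ (k,l) + (if k = l then J $$ (l,l) else 0)" if "k < N" for k
        using that l J unfolding nilp_def by auto
      then have "(\<Sum>k\<in>{0..<N}. P m $$ (i,k) * J $$ (k,l)) =
          (\<Sum>k\<in>{0..<N}. P m $$ (i,k) * nilp J $$ (k,l)) + P m $$ (i,l) * J $$ (l,l)"
      proof -
        have "P m $$ (i,k) * J $$ (k,l) =
            P m $$ (i,k) * nilp J $$ (k,l) + (if k = l then P m $$ (i,l) * J $$ (l,l) else 0)"
          if "k \<in> {0..<N}" for k
          using Jsplit[of k] that by (cases "k = l") (simp_all add: distrib_left)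
        then have "(\<Sum>k\<in>{0..<N}. P m $$ (i,k) * J $$ (k,l)) =
            (\<Sum>k\<in>{0..<N}. P m $$ (i,k) * nilp J $$ (k,l) + (if k = l then P m $$ (i,l) * J $$ (l,l) else 0))"
          by (rule sum.cong[OF refl])
        then show ?thesis using l by (simp add: sum.distrib)
      qed
      then show "d ^ Suc m * (\<Sum>k\<in>{0..<N}. P m $$ (i,k) * J $$ (k,l)) =
          d ^ Suc m * (P (Suc m) $$ (i,l) + P m $$ (i,l) * J $$ (i,i))"
        using PS[OF i l] Pd[OF i l] by simp
    qed
    finally have "(res J z * (z \<cdot>\<^sub>m 1\<^sub>m N - J)) $$ (i,l) =
        z * res J z $$ (i,l) - (\<Sum>m<N. d ^ Suc m * (P (Suc m) $$ (i,l) + P m $$ (i,l) * J $$ (i,i)))" .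
    also have "\<dots> = (\<Sum>m<N. P m $$ (i,l) * d ^ m - P (Suc m) $$ (i,l) * d ^ Suc m)"
    proof -
      have "z * res J z $$ (i,l) = (\<Sum>m<N. z * (P m $$ (i,l) * d ^ Suc m))"
        unfolding R[OF l] by (simp add: sum_distrib_left)
      then have "z * res J z $$ (i,l) - (\<Sum>m<N. d ^ Suc m * (P (Suc m) $$ (i,l) + P m $$ (i,l) * J $$ (i,i)))
         = (\<Sum>m<N. z * (P m $$ (i,l) * d ^ Suc m) - d ^ Suc m * (P (Suc m) $$ (i,l) + P m $$ (i,l) * J $$ (i,i)))"
        by (simp add: sum_subtractf)
      also have "\<dots> = (\<Sum>m<N. P m $$ (i,l) * (d ^ m * ((z - J $$ (i,i)) * d)) - P (Suc m) $$ (i,l) * d ^ Suc m)"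
        by (rule sum.cong[OF refl]) (simp add: algebra_simps)
      finally have "z * res J z $$ (i,l) - (\<Sum>m<N. d ^ Suc m * (P (Suc m) $$ (i,l) + P m $$ (i,l) * J $$ (i,i)))
         = (\<Sum>m<N. P m $$ (i,l) * (d ^ m * ((z - J $$ (i,i)) * d)) - P (Suc m) $$ (i,l) * d ^ Suc m)" .
      then show ?thesis using zd by simp
    qed
    also have "\<dots> = P 0 $$ (i,l) * d ^ 0 - P N $$ (i,l) * d ^ N"
      by (rule sum_lessThan_telescope')
    also have "\<dots> = 1\<^sub>m N $$ (i,l)"
      using nilp_pow_N[OF js i l] i l NC unfolding P_def by simp
    finally show "(res J z * (z \<cdot>\<^sub>m 1\<^sub>m N - J)) $$ (i,l) = 1\<^sub>m N $$ (i,l)" .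
  qed (use J in \<open>auto simp: res_def\<close>)
qed


lemma mat_inv_eq:
  assumes M: "M \<in> carrier_mat n n" and B: "B \<in> carrier_mat n n" and BM: "B * M = 1\<^sub>m n"
  shows "mat_inv M = B"
proof -
  have MB: "M * B = 1\<^sub>m n" using mat_mult_left_right_inverse[OF B M BM] .
  show ?thesis unfolding mat_inv_def
  proof (rule the_equality)
    show "B \<in> carrier_mat (dim_row M) (dim_row M) \<and> inverts_mat M B \<and> inverts_mat B M"
      using M B MB BM unfolding inverts_mat_def by auto
  next
    fix B' assume "B' \<in> carrier_mat (dim_row M) (dim_row M) \<and> inverts_mat M B' \<and> inverts_mat B' M"
    then have B': "B' \<in> carrier_mat n n" and "B' * M = 1\<^sub>m n" using M unfolding inverts_mat_def by auto
    then have "B' = B' * (M * B)" using MB by simp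
    also have "\<dots> = (B' * M) * B" using B' M B by simp
    also have "\<dots> = B" using \<open>B' * M = 1\<^sub>m n\<close> B by simp
    finally show "B' = B" .
  qed
qed

lemma mat_inv_props:
  assumes M: "M \<in> carrier_mat n n" and inv: "invertible_mat M"
  shows "mat_inv M \<in> carrier_mat n n" "mat_inv M * M = 1\<^sub>m n" "M * mat_inv M = 1\<^sub>m n"
proof -
  from inv obtain B where "inverts_mat M B" "inverts_mat B M" unfolding invertible_mat_def by auto
  then have MB: "M * B = 1\<^sub>m n" and BM: "B * M = 1\<^sub>m (dim_row B)" using M unfolding inverts_mat_def by auto
  have "dim_col B = n" using MB M by (metis index_mult_mat(3) index_one_mat(3))
  moreover have "dim_row B = n" using BM M by (metis index_mult_mat(3) index_one_mat(3) carrier_matD(2))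
  ultimately have B: "B \<in> carrier_mat n n" by auto
  with BM have BM: "B * M = 1\<^sub>m n" by simp
  have e: "mat_inv M = B" by (rule mat_inv_eq[OF M B BM])
  show "mat_inv M \<in> carrier_mat n n" "mat_inv M * M = 1\<^sub>m n" "M * mat_inv M = 1\<^sub>m n"
    using e B BM MB by auto
qed

lemma sim_shift:
  fixes S Q J A :: "complex mat"
  assumes S: "S \<in> carrier_mat N N" and Q: "Q \<in> carrier_mat N N" and J: "J \<in> carrier_mat N N"
    and SQ: "S * Q = 1\<^sub>m N" and A: "A = S * J * Q"
  shows "S * (z \<cdot>\<^sub>m 1\<^sub>m N - J) * Q = z \<cdot>\<^sub>m 1\<^sub>m N - A"
proof -
  have "S * (z \<cdot>\<^sub>m 1\<^sub>m N - J) = S * (z \<cdot>\<^sub>m 1\<^sub>m N) - S * J"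
    by (rule mult_minus_distrib_mat[of S N N]) (use S J in auto)
  also have "S * (z \<cdot>\<^sub>m 1\<^sub>m N) = z \<cdot>\<^sub>m (S * 1\<^sub>m N)"
    by (rule mult_smult_distrib[of S N N]) (use S in auto)
  finally have "S * (z \<cdot>\<^sub>m 1\<^sub>m N - J) = z \<cdot>\<^sub>m S - S * J" using S by simp
  then have "S * (z \<cdot>\<^sub>m 1\<^sub>m N - J) * Q = (z \<cdot>\<^sub>m S - S * J) * Q" by simp
  also have "\<dots> = z \<cdot>\<^sub>m (S * Q) - S * J * Q"
    using S J Q by (simp add: minus_mult_distrib_mat[of _ N N] mult_smult_assoc_mat[of _ N N])
  finally show ?thesis using SQ A by simp
qed

lemma resolvent_A:
  assumes S: "S \<in> carrier_mat N N" and Q: "Q \<in> carrier_mat N N"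
    and js: "jstruct J N" and SQ: "S * Q = 1\<^sub>m N" and QS: "Q * S = 1\<^sub>m N" and A: "A = S * J * Q"
    and z: "\<And>i. i < N \<Longrightarrow> z \<noteq> J $$ (i,i)"
  shows "mat_inv (z \<cdot>\<^sub>m 1\<^sub>m N - A) = S * res J z * Q"
proof -
  have J: "J \<in> carrier_mat N N" using js unfolding jstruct_def by auto
  have R: "res J z \<in> carrier_mat N N" using J unfolding res_def by auto
  have e: "z \<cdot>\<^sub>m 1\<^sub>m N - A = S * (z \<cdot>\<^sub>m 1\<^sub>m N - J) * Q" using sim_shift[OF S Q J SQ A] by simp
  have Z: "z \<cdot>\<^sub>m 1\<^sub>m N - J \<in> carrier_mat N N" using J by auto
  have "(S * res J z * Q) * (S * (z \<cdot>\<^sub>m 1\<^sub>m N - J) * Q) = S * (res J z * ((Q * S) * ((z \<cdot>\<^sub>m 1\<^sub>m N - J) * Q)))"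
    using S Q R Z by (simp add: assoc_mult_mat[of _ N N _ N _ N])
  also have "\<dots> = S * ((res J z * (z \<cdot>\<^sub>m 1\<^sub>m N - J)) * Q)"
    using S Q R Z QS left_mult_one_mat[of "(z \<cdot>\<^sub>m 1\<^sub>m N - J) * Q" N N] by (simp add: assoc_mult_mat[of _ N N _ N _ N])
  also have "\<dots> = 1\<^sub>m N" using res_inv[OF js z] S Q SQ by simp
  finally show ?thesis unfolding e
    by (intro mat_inv_eq) (use S Q R Z in auto)
qed

lemma pow_contour2:
  assumes c: "pos_simple_closed_curve g" and w: "w \<notin> path_image g"
    and io: "w \<in> inside (path_image g) \<or> w \<in> outside (path_image g)"
  shows "((\<lambda>z. (1 / (z - w)) ^ Suc m) has_contour_integral
           (if m = 0 \<and> w \<in> inside (path_image g) then 2 * pi * \<i> else 0)) g"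
proof -
  have vp: "valid_path g" and cl: "pathfinish g = pathstart g"
    using c unfolding pos_simple_closed_curve_def by auto
  have wn: "(if w \<in> inside (path_image g) then 1 else 0) = winding_number g w"
  proof (cases "w \<in> inside (path_image g)")
    case True
    then have "cint g (\<lambda>z. 1 / (z - w)) = 2 * pi * \<i>" using c unfolding pos_simple_closed_curve_def by auto
    moreover have "cint g (\<lambda>z. 1 / (z - w)) = complex_of_real (2 * pi) * \<i> * winding_number g w"
      by (rule cint_eq[OF vp has_contour_integral_winding_number[OF vp w]])
    ultimately show ?thesis using True by (simp add: pi_neq_zero)
  next
    case False
    then show ?thesis using io winding_number_zero_in_outside[OF valid_path_imp_path[OF vp] cl] by auto
  qed
  show ?thesis using pow_contour[OF vp cl w, of m] wn[symmetric] by (auto split: if_splits)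
qed


definition dmat :: "complex mat \<Rightarrow> nat \<Rightarrow> (real \<Rightarrow> complex) \<Rightarrow> complex mat" where
  "dmat J N g = mat N N (\<lambda>(i,j). if i = j \<and> J $$ (i,i) \<in> inside (path_image g) then 1 else 0)"

lemma riesz_eq:
  assumes S: "S \<in> carrier_mat N N" and Q: "Q \<in> carrier_mat N N"
    and js: "jstruct J N" and SQ: "S * Q = 1\<^sub>m N" and QS: "Q * S = 1\<^sub>m N" and A: "A = S * J * Q"
    and c: "pos_simple_closed_curve g"
    and noe: "\<And>i. i < N \<Longrightarrow> J $$ (i,i) \<notin> path_image g"
    and io: "\<And>i. i < N \<Longrightarrow> J $$ (i,i) \<in> inside (path_image g) \<or> J $$ (i,i) \<in> outside (path_image g)"
  shows "riesz_proj g N A = S * dmat J N g * Q"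
proof -
  have J: "J \<in> carrier_mat N N" using js unfolding jstruct_def by auto
  have vp: "valid_path g" using c unfolding pos_simple_closed_curve_def by auto
  define P where "P m = nilp J ^\<^sub>m m" for m
  have PC: "P m \<in> carrier_mat N N" for m unfolding P_def using nilp_carrier[OF J] by auto
  define ins where "ins k = (J $$ (k,k) \<in> inside (path_image g))" for k
  show ?thesis
  proof (rule eq_matI)
    fix i j assume "i < dim_row (S * dmat J N g * Q)" "j < dim_col (S * dmat J N g * Q)"
    then have i: "i < N" and j: "j < N" using S Q by auto
    define coef where "coef l k m = S $$ (i,k) * P m $$ (k,l) * Q $$ (l,j)" for l k m
    have F: "mat_inv (z \<cdot>\<^sub>m 1\<^sub>m N - A) $$ (i,j) =
        (\<Sum>l\<in>{0..<N}. \<Sum>k\<in>{0..<N}. \<Sum>m<N. coef l k m * (1 / (z - J $$ (k,k))) ^ Suc m)"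
      if z: "z \<in> path_image g" for z
    proof -
      have zz: "\<And>k. k < N \<Longrightarrow> z \<noteq> J $$ (k,k)" using noe z by auto
      have R: "res J z \<in> carrier_mat N N" using J unfolding res_def by auto
      have "mat_inv (z \<cdot>\<^sub>m 1\<^sub>m N - A) $$ (i,j) = (S * res J z * Q) $$ (i,j)"
        using resolvent_A[OF S Q js SQ QS A zz] by simp
      also have "\<dots> = (\<Sum>k\<in>{0..<N}. S $$ (i,k) * (\<Sum>l\<in>{0..<N}. res J z $$ (k,l) * Q $$ (l,j)))"
        using i j S Q R by (simp add: scalar_prod_def)
      also have "\<dots> = (\<Sum>k\<in>{0..<N}. \<Sum>l\<in>{0..<N}. S $$ (i,k) * res J z $$ (k,l) * Q $$ (l,j))"
        by (simp add: sum_distrib_left mult.assoc)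
      also have "\<dots> = (\<Sum>l\<in>{0..<N}. \<Sum>k\<in>{0..<N}. S $$ (i,k) * res J z $$ (k,l) * Q $$ (l,j))"
        by (rule sum.swap)
      also have "\<dots> = (\<Sum>l\<in>{0..<N}. (\<Sum>k\<in>{0..<N}. S $$ (i,k) * res J z $$ (k,l)) * Q $$ (l,j))"
        by (simp add: sum_distrib_right)
      also have "\<dots> = (\<Sum>l\<in>{0..<N}. \<Sum>k\<in>{0..<N}. \<Sum>m<N. coef l k m * (1 / (z - J $$ (k,k))) ^ Suc m)"
        using J unfolding coef_def res_def P_def
        by (auto simp: sum_distrib_left sum_distrib_right mult.assoc mult.left_commute intro!: sum.cong)
      finally show ?thesis .
    qed
    have HC: "((\<lambda>z. \<Sum>l\<in>{0..<N}. \<Sum>k\<in>{0..<N}. \<Sum>m<N. coef l k m * (1 / (z - J $$ (k,k))) ^ Suc m)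
        has_contour_integral
        (\<Sum>l\<in>{0..<N}. \<Sum>k\<in>{0..<N}. \<Sum>m<N. coef l k m * (if m = 0 \<and> ins k then 2 * pi * \<i> else 0))) g"
      unfolding ins_def
      by (intro has_contour_integral_sum has_contour_integral_lmul pow_contour2[OF c] finite_atLeastLessThan
          finite_lessThan) (use noe io in auto)
    have HC2: "((\<lambda>z. mat_inv (z \<cdot>\<^sub>m 1\<^sub>m N - A) $$ (i,j)) has_contour_integral
        (\<Sum>l\<in>{0..<N}. \<Sum>k\<in>{0..<N}. \<Sum>m<N. coef l k m * (if m = 0 \<and> ins k then 2 * pi * \<i> else 0))) g"
      by (rule has_contour_integral_eq[OF HC]) (use F in auto)
    have V: "(\<Sum>l\<in>{0..<N}. \<Sum>k\<in>{0..<N}. \<Sum>m<N. coef l k m * (if m = 0 \<and> ins k then 2 * pi * \<i> else 0))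
        = 2 * pi * \<i> * (\<Sum>l\<in>{0..<N}. S $$ (i,l) * (if ins l then 1 else 0) * Q $$ (l,j))"
    proof -
      have "(\<Sum>m<N. coef l k m * (if m = 0 \<and> ins k then 2 * pi * \<i> else 0)) =
          coef l k 0 * (if ins k then 2 * pi * \<i> else 0)" for l k
      proof -
        have "(\<Sum>m<N. coef l k m * (if m = 0 \<and> ins k then 2 * pi * \<i> else 0)) =
            (\<Sum>m<N. if m = 0 then coef l k 0 * (if ins k then 2 * pi * \<i> else 0) else 0)"
          by (rule sum.cong) auto
        then show ?thesis using i by simp
      qed
      then have "(\<Sum>l\<in>{0..<N}. \<Sum>k\<in>{0..<N}. \<Sum>m<N. coef l k m * (if m = 0 \<and> ins k then 2 * pi * \<i> else 0))
          = (\<Sum>l\<in>{0..<N}. \<Sum>k\<in>{0..<N}. coef l k 0 * (if ins k then 2 * pi * \<i> else 0))" by simp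
      also have "\<dots> = (\<Sum>l\<in>{0..<N}. \<Sum>k\<in>{0..<N}. if k = l then S $$ (i,l) * Q $$ (l,j) * (if ins l then 2 * pi * \<i> else 0) else 0)"
        unfolding coef_def P_def by (intro sum.cong refl) (use J nilp_carrier[OF J] in auto)
      also have "\<dots> = (\<Sum>l\<in>{0..<N}. S $$ (i,l) * Q $$ (l,j) * (if ins l then 2 * pi * \<i> else 0))"
        by simp
      also have "\<dots> = 2 * pi * \<i> * (\<Sum>l\<in>{0..<N}. S $$ (i,l) * (if ins l then 1 else 0) * Q $$ (l,j))"
        by (simp add: sum_distrib_left) (auto intro!: sum.cong)
      finally show ?thesis .
    qed
    have "riesz_proj g N A $$ (i,j) = (1 / (2 * pi * \<i>)) * cint g (\<lambda>z. mat_inv (z \<cdot>\<^sub>m 1\<^sub>m N - A) $$ (i,j))"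
      unfolding riesz_proj_def using i j by simp
    also have "\<dots> = (\<Sum>l\<in>{0..<N}. S $$ (i,l) * (if ins l then 1 else 0) * Q $$ (l,j))"
      unfolding cint_eq[OF vp HC2] V by (simp add: pi_neq_zero)
    also have "\<dots> = (S * dmat J N g * Q) $$ (i,j)"
    proof -
      have SD: "(S * dmat J N g) $$ (i,l) = S $$ (i,l) * (if ins l then 1 else 0)" if "l < N" for l
      proof -
        have "(S * dmat J N g) $$ (i,l) = (\<Sum>k\<in>{0..<N}. S $$ (i,k) * (if k = l \<and> ins k then 1 else 0))"
          using i that S unfolding dmat_def ins_def by (simp add: scalar_prod_def)
        also have "\<dots> = (\<Sum>k\<in>{0..<N}. if k = l then S $$ (i,l) * (if ins l then 1 else 0) else 0)"
          by (rule sum.cong) auto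
        finally show ?thesis using that by simp
      qed
      show ?thesis using i j S Q SD unfolding dmat_def by (simp add: scalar_prod_def)
    qed
    finally show "riesz_proj g N A $$ (i,j) = (S * dmat J N g * Q) $$ (i,j)" .
  qed (use S Q in \<open>auto simp: riesz_proj_def\<close>)
qed


lemma det_invertible:
  fixes M :: "complex mat"
  assumes M: "M \<in> carrier_mat n n" and d: "det M \<noteq> 0"
  shows "invertible_mat M"
proof -
  have "M \<in> Units (ring_mat TYPE(complex) n undefined)" by (rule det_non_zero_imp_unit[OF M d])
  then obtain B where B: "B \<in> carrier_mat n n" "B * M = 1\<^sub>m n" "M * B = 1\<^sub>m n"
    unfolding Units_def ring_mat_def by auto
  then show ?thesis using M unfolding invertible_mat_def inverts_mat_def square_mat.simps by auto
qed

lemma right_inv_invertible: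
  fixes M :: "complex mat"
  assumes M: "M \<in> carrier_mat n n" and B: "B \<in> carrier_mat n n" and MB: "M * B = 1\<^sub>m n"
  shows "invertible_mat M" "det M \<noteq> 0"
proof -
  have BM: "B * M = 1\<^sub>m n" using mat_mult_left_right_inverse[OF M B MB] .
  show "invertible_mat M" using M B MB BM unfolding invertible_mat_def inverts_mat_def square_mat.simps by auto
  show "det M \<noteq> 0" using det_mult[OF M B] MB by auto
qed

lemma invertible_det:
  fixes M :: "complex mat"
  assumes M: "M \<in> carrier_mat n n" and inv: "invertible_mat M"
  shows "det M \<noteq> 0"
proof -
  from inv obtain B where "inverts_mat M B" "inverts_mat B M" unfolding invertible_mat_def by auto
  then have MB: "M * B = 1\<^sub>m n" and BM: "B * M = 1\<^sub>m (dim_row B)" using M unfolding inverts_mat_def by auto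
  have "dim_col B = n" using MB M by (metis index_mult_mat(3) index_one_mat(3))
  moreover have "dim_row B = n" using BM M by (metis index_mult_mat(3) index_one_mat(3) carrier_matD(2))
  ultimately have B: "B \<in> carrier_mat n n" by auto
  show ?thesis using right_inv_invertible(2)[OF M B MB] .
qed

lemma mult_zero_vec': "L \<in> carrier_mat m n \<Longrightarrow> L *\<^sub>v 0\<^sub>v n = (0\<^sub>v m :: 'a :: semiring_0 vec)"
  by (intro eq_vecI) auto

lemma adj_carrier: "X \<in> carrier_mat n m \<Longrightarrow> mat_adjoint X \<in> carrier_mat m n"
  unfolding mat_adjoint_def by auto

lemma adj_index: "X \<in> carrier_mat n m \<Longrightarrow> i < m \<Longrightarrow> j < n \<Longrightarrow> mat_adjoint X $$ (i,j) = cnj (X $$ (j,i))"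
  unfolding mat_adjoint_def by (auto simp: mat_of_rows_def)

lemma gram_det:
  fixes X :: "complex mat"
  assumes X: "X \<in> carrier_mat n m" and L: "L \<in> carrier_mat m n" and LX: "L * X = 1\<^sub>m m"
  shows "det (mat_adjoint X * X) \<noteq> 0"
proof
  assume "det (mat_adjoint X * X) = 0"
  from this[unfolded det_0_iff_vec_prod_zero_field[OF mult_carrier_mat[OF adj_carrier[OF X] X]]]
  obtain v where v: "v \<in> carrier_vec m" "v \<noteq> 0\<^sub>v m" and z: "(mat_adjoint X * X) *\<^sub>v v = 0\<^sub>v m" by auto
  define w where "w = X *\<^sub>v v"
  have w: "w \<in> carrier_vec n" unfolding w_def using X v by auto
  have z2: "mat_adjoint X *\<^sub>v w = 0\<^sub>v m" using z X v unfolding w_def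
    by (simp add: assoc_mult_mat_vec[OF adj_carrier[OF X] X v(1)])
  have wi: "w $ i = (\<Sum>j\<in>{0..<m}. X $$ (i,j) * v $ j)" if "i < n" for i
    unfolding w_def using that X v by (auto simp: scalar_prod_def)
  have "0 = (\<Sum>j\<in>{0..<m}. cnj (v $ j) * (mat_adjoint X *\<^sub>v w) $ j)" using z2 by simp
  also have "\<dots> = (\<Sum>j\<in>{0..<m}. cnj (v $ j) * (\<Sum>i\<in>{0..<n}. cnj (X $$ (i,j)) * w $ i))"
    using X w adj_carrier[OF X] by (intro sum.cong refl) (auto simp: scalar_prod_def adj_index)
  also have "\<dots> = (\<Sum>j\<in>{0..<m}. \<Sum>i\<in>{0..<n}. w $ i * cnj (X $$ (i,j) * v $ j))"
    by (simp add: sum_distrib_left mult_ac)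
  also have "\<dots> = (\<Sum>i\<in>{0..<n}. \<Sum>j\<in>{0..<m}. w $ i * cnj (X $$ (i,j) * v $ j))"
    by (rule sum.swap)
  also have "\<dots> = (\<Sum>i\<in>{0..<n}. w $ i * cnj (w $ i))"
    using wi by (simp add: sum_distrib_left[symmetric] cnj_sum)
  also have "\<dots> = complex_of_real (\<Sum>i\<in>{0..<n}. (cmod (w $ i))^2)"
    by (simp add: complex_norm_square del: of_real_power)
  finally have "complex_of_real (\<Sum>i\<in>{0..<n}. (cmod (w $ i))^2) = 0" by simp
  then have "(\<Sum>i\<in>{0..<n}. (cmod (w $ i))^2) = 0" by (simp only: of_real_eq_0_iff)
  then have "\<forall>i\<in>{0..<n}. (cmod (w $ i))^2 = 0" by (subst (asm) sum_nonneg_eq_0_iff) auto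
  then have "w = 0\<^sub>v n" using w by (intro eq_vecI) auto
  then have "L *\<^sub>v w = 0\<^sub>v m" using L by (simp add: mult_zero_vec')
  moreover have "L *\<^sub>v w = v" unfolding w_def using L X v LX
    by (simp add: assoc_mult_mat_vec[symmetric, OF L X v(1)])
  ultimately show False using v by simp
qed

lemma rank_left_inv:
  fixes Z :: "complex mat"
  assumes Z: "Z \<in> carrier_mat n m" and L: "L \<in> carrier_mat m n" and LZ: "L * Z = 1\<^sub>m m"
  shows "vec_space.rank n Z = m"
proof -
  interpret vec_space "TYPE(complex)" n .
  have inj: "v = 0\<^sub>v m" if "v \<in> carrier_vec m" "Z *\<^sub>v v = 0\<^sub>v n" for v
  proof -
    have "v = (L * Z) *\<^sub>v v" using LZ that by simp
    also have "\<dots> = L *\<^sub>v (Z *\<^sub>v v)" using L Z that by simp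
    finally show ?thesis using that L by (simp add: mult_zero_vec')
  qed
  have dist: "distinct (cols Z)"
  proof (rule ccontr)
    assume "\<not> distinct (cols Z)"
    then obtain i j where "i \<noteq> j" "cols Z ! i = cols Z ! j" "i < length (cols Z)" "j < length (cols Z)"
      using distinct_conv_nth by blast
    then have ij: "col Z i = col Z j" "i < m" "j < m" "i \<noteq> j" using Z by auto
    have "col (L * Z) i = col (L * Z) j" using ij L Z by simp
    then have "col (1\<^sub>m m) i = (col (1\<^sub>m m) j :: complex vec)" unfolding LZ .
    then have "(col (1\<^sub>m m) i :: complex vec) $ i = col (1\<^sub>m m) j $ i" by simp
    then show False using ij by simp
  qed
  have "lin_indpt (set (cols Z))"
  proof
    assume "lin_dep (set (cols Z))"
    from lin_depE[OF Z this dist] obtain v where "v \<in> carrier_vec m" "v \<noteq> 0\<^sub>v m" "Z *\<^sub>v v = 0\<^sub>v n" .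
    then show False using inj by auto
  qed
  then show ?thesis using lin_indpt_full_rank[OF Z dist] by auto
qed


lemma square_part:
  fixes A Ai P T :: "complex mat"
  assumes A: "A \<in> carrier_mat N N" and Ai: "Ai \<in> carrier_mat N N" and P: "P \<in> carrier_mat N N"
    and T: "T \<in> carrier_mat N N"
    and AAi: "A * Ai = 1\<^sub>m N" and AiA: "Ai * A = 1\<^sub>m N" and PA: "P * A = A * P"
    and TAP: "T * A * P = A * P" and PT: "P * T = T"
  shows "similar_mat ((1\<^sub>m N - T) * A) (A - P * A)"
proof -
  note c[simp] = A Ai P T minus_carrier_mat add_carrier_mat carrier_matD[OF A] carrier_matD[OF Ai] carrier_matD[OF P] carrier_matD[OF T] assoc_mult_mat[of _ N N _ N _ N] mult_carrier_mat[of _ N N]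
  define M where "M = (1\<^sub>m N - T) * A"
  have MC[simp]: "M \<in> carrier_mat N N" unfolding M_def by (rule mult_carrier_mat[OF minus_carrier_mat[OF T] A])
  note [simp] = carrier_matD[OF MC]
  have MA: "M = A - T * A" unfolding M_def by (simp add: minus_mult_distrib_mat[OF one_carrier_mat T A])
  have MP: "M * P = 0\<^sub>m N N"
  proof -
    have "M * P = A * P - T * A * P" unfolding MA by (simp add: minus_mult_distrib_mat[OF A mult_carrier_mat[OF T A] P])
    then show ?thesis using TAP minus_r_inv_mat[OF mult_carrier_mat[OF A P]] by simp
  qed
  have PM: "P * M = P * A - T * A"
  proof -
    have "P * M = P * A - P * (T * A)" unfolding MA by (rule mult_minus_distrib_mat[OF P A mult_carrier_mat[OF T A]])
    also have "P * (T * A) = T * A" using PT by (simp flip: assoc_mult_mat[of P N N T N A N])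
    finally show ?thesis .
  qed
  have R: "M - P * M = A - P * A" unfolding PM by (subst MA, intro eq_matI) auto
  have AiP: "Ai * P = P * Ai"
  proof -
    have "Ai * P = Ai * P * (A * Ai)" using AAi by simp
    also have "\<dots> = Ai * (P * A) * Ai" by simp
    also have "\<dots> = (Ai * A) * P * Ai" unfolding PA by simp
    finally show ?thesis using AiA by simp
  qed
  define K where "K = P * M * Ai"
  have KC[simp]: "K \<in> carrier_mat N N" unfolding K_def by auto
  note [simp] = carrier_matD[OF KC]
  have KP: "K * P = 0\<^sub>m N N"
  proof -
    have "K * P = P * M * (Ai * P)" unfolding K_def by simp
    also have "\<dots> = P * (M * P) * Ai" unfolding AiP by simp
    finally show ?thesis unfolding MP by simp
  qed
  have KK: "K * K = 0\<^sub>m N N"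
  proof -
    have "K * K = (K * P) * M * Ai" unfolding K_def by simp
    then show ?thesis unfolding KP by simp
  qed
  have MK: "M * K = 0\<^sub>m N N"
  proof -
    have "M * K = (M * P) * M * Ai" unfolding K_def by simp
    then show ?thesis unfolding MP by simp
  qed
  have KA: "K * A = P * M" unfolding K_def using AiA by simp
  have KT: "K * T = 0\<^sub>m N N"
  proof -
    have "K * T = K * (P * T)" using PT by simp
    also have "\<dots> = (K * P) * T" by simp
    finally show ?thesis unfolding KP by simp
  qed
  have KM: "K * M = P * M"
  proof -
    have "K * M = K * A - K * (T * A)" unfolding MA by (rule mult_minus_distrib_mat[OF KC A mult_carrier_mat[OF T A]])
    also have "K * (T * A) = 0\<^sub>m N N" by (simp flip: assoc_mult_mat[of K N N T N A N] add: KT)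
    finally show ?thesis unfolding KA by (intro eq_matI) auto
  qed
  have R2: "A - P * A = (1\<^sub>m N - K) * M"
  proof -
    have "(1\<^sub>m N - K) * M = M - K * M" by (simp add: minus_mult_distrib_mat[OF one_carrier_mat KC MC])
    then show ?thesis unfolding KM R by simp
  qed
  have inv1: "(1\<^sub>m N + K) * (1\<^sub>m N - K) = 1\<^sub>m N"
  proof -
    have "(1\<^sub>m N + K) * (1\<^sub>m N - K) = (1\<^sub>m N - K) + K * (1\<^sub>m N - K)"
      by (simp add: add_mult_distrib_mat[OF one_carrier_mat KC minus_carrier_mat[OF KC]])
    also have "K * (1\<^sub>m N - K) = K - K * K" by (simp add: mult_minus_distrib_mat[OF KC one_carrier_mat KC])
    finally show ?thesis unfolding KK by (intro eq_matI) auto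
  qed
  have inv2: "(1\<^sub>m N - K) * (1\<^sub>m N + K) = 1\<^sub>m N"
  proof -
    have "(1\<^sub>m N - K) * (1\<^sub>m N + K) = (1\<^sub>m N + K) - K * (1\<^sub>m N + K)"
      by (simp add: minus_mult_distrib_mat[OF one_carrier_mat KC add_carrier_mat[OF KC]])
    also have "K * (1\<^sub>m N + K) = K + K * K" by (simp add: mult_add_distrib_mat[OF KC one_carrier_mat KC])
    finally show ?thesis unfolding KK by (intro eq_matI) auto
  qed
  have "(1\<^sub>m N + K) * (A - P * A) * (1\<^sub>m N - K) = ((1\<^sub>m N + K) * (1\<^sub>m N - K)) * M * (1\<^sub>m N - K)"
    unfolding R2 by simp
  also have "\<dots> = M * (1\<^sub>m N - K)" unfolding inv1 by simp
  also have "\<dots> = M - M * K" by (simp add: mult_minus_distrib_mat[OF MC one_carrier_mat KC])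
  also have "\<dots> = M" unfolding MK by (intro eq_matI) auto
  finally have eq: "M = (1\<^sub>m N + K) * (A - P * A) * (1\<^sub>m N - K)" by simp
  show ?thesis unfolding M_def[symmetric] similar_mat_def
    by (rule exI[of _ "1\<^sub>m N + K"], rule exI[of _ "1\<^sub>m N - K"])
       (use inv1 inv2 eq in \<open>auto simp: similar_mat_wit_def Let_def\<close>)
qed


lemma shift_eq:
  assumes "X \<in> carrier_mat a b" "Y \<in> carrier_mat b c" "R \<in> carrier_mat c d" "X * Y = W"
  shows "X * (Y * R) = W * R"
  using assms by (metis assoc_mult_mat)

lemma main_alg:
  fixes A S Q J B C Ym :: "complex mat"
  assumes A: "A \<in> carrier_mat N N" and Ainv: "invertible_mat A"
    and S: "S \<in> carrier_mat N N" and Q: "Q \<in> carrier_mat N N" and J: "J \<in> carrier_mat N N"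
    and SQ: "S * Q = 1\<^sub>m N" and QS: "Q * S = 1\<^sub>m N" and AJ: "A = S * J * Q"
    and B: "B \<in> carrier_mat N s" and C: "C \<in> carrier_mat s N" and CB: "C * B = 1\<^sub>m s"
    and DJ: "B * C * J = J * (B * C)"
    and Y: "Ym \<in> carrier_mat N s" and dt: "det (C * Q * Ym) \<noteq> 0"
    and P_def: "P = S * (B * C) * Q" and Z_def: "Z = P * Ym"
  shows "vec_space.rank N Z = s \<and> invertible_mat (mat_adjoint Z * A * Z)
     \<and> char_poly ((1\<^sub>m N - A * Z * mat_inv (mat_adjoint Z * A * Z) * mat_adjoint Z) * A)
       = char_poly (J - B * C * J)"
proof -
  note AS = assoc_mult_mat[of _ N N _ N _ N] assoc_mult_mat[of _ N N _ N _ s] assoc_mult_mat[of _ N N _ s _ N] assoc_mult_mat[of _ N N _ s _ s] assoc_mult_mat[of _ N s _ N _ N] assoc_mult_mat[of _ N s _ N _ s] assoc_mult_mat[of _ N s _ s _ N] assoc_mult_mat[of _ N s _ s _ s] assoc_mult_mat[of _ s N _ N _ N] assoc_mult_mat[of _ s N _ N _ s] assoc_mult_mat[of _ s N _ s _ N] assoc_mult_mat[of _ s N _ s _ s] assoc_mult_mat[of _ s s _ N _ N] assoc_mult_mat[of _ s s _ N _ s] assoc_mult_mat[of _ s s _ s _ N] assoc_mult_mat[of _ s s _ s _ s]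
  note MC = mult_carrier_mat[of _ _ N] mult_carrier_mat[of _ _ s]
  define G where "G = C * (Q * Ym)"
  have G: "G \<in> carrier_mat s s" unfolding G_def using C Q Y by simp
  have dG: "det G \<noteq> 0" using dt C Q Y unfolding G_def by simp
  define Gi where "Gi = mat_inv G"
  have Gi: "Gi \<in> carrier_mat s s" "Gi * G = 1\<^sub>m s" "G * Gi = 1\<^sub>m s"
    using mat_inv_props[OF G det_invertible[OF G dG]] unfolding Gi_def by auto
  define L where "L = Gi * (C * Q)"
  have P: "P \<in> carrier_mat N N" unfolding P_def using S B C Q by (simp add: MC)
  have Z: "Z \<in> carrier_mat N s" unfolding Z_def using P Y by simp
  have Lc: "L \<in> carrier_mat s N" unfolding L_def using Gi C Q by (simp add: MC)
  have Pn: "P = S * (B * (C * Q))" unfolding P_def using S B C Q by (simp add: AS MC)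
  have Zn: "Z = S * (B * G)" unfolding Z_def Pn G_def using S B C Q Y by (simp add: AS MC)
  have QS': "Q * (S * R) = R" if "R \<in> carrier_mat N k" for R k
    using shift_eq[OF Q S that QS] that by simp
  have CB': "C * (B * R) = R" if "R \<in> carrier_mat s k" for R k
    using shift_eq[OF C B that CB] that by simp
  have GGi': "G * (Gi * R) = R" if "R \<in> carrier_mat s k" for R k
    using shift_eq[OF G Gi(1) that Gi(3)] that by simp
  have LZ: "L * Z = 1\<^sub>m s"
  proof -
    have "L * Z = Gi * (C * (Q * (S * (B * G))))" unfolding L_def Zn using Gi C Q S B G by (simp add: AS MC)
    also have "\<dots> = Gi * G" using QS'[of "B * G" s] CB'[of G s] B G by simp
    finally show ?thesis using Gi by simp
  qed
  have ZL: "Z * L = P"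
  proof -
    have "Z * L = S * (B * (G * (Gi * (C * Q))))" unfolding L_def Zn using Gi C Q S B G by (simp add: AS MC)
    also have "\<dots> = S * (B * (C * Q))" using GGi'[of "C * Q" N] C Q by simp
    finally show ?thesis using Pn by simp
  qed
  have DJ': "B * (C * (J * R)) = J * (B * (C * R))" if "R \<in> carrier_mat N N" for R
  proof -
    have "B * (C * (J * R)) = (B * C * J) * R" using B C J that by (simp add: AS MC)
    also have "\<dots> = (J * (B * C)) * R" using DJ by simp
    also have "\<dots> = J * (B * (C * R))" using B C J that by (simp add: AS MC)
    finally show ?thesis .
  qed
  have PA: "P * A = A * P"
  proof -
    have "P * A = S * (B * (C * (Q * (S * (J * Q)))))" unfolding Pn AJ using S B C Q J by (simp add: AS MC)
    also have "\<dots> = S * (J * (B * (C * Q)))" using QS'[of "J * Q" N] DJ'[of Q] J Q by simp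
    also have "\<dots> = A * P" unfolding Pn AJ using S B C Q J QS'[of "B * (C * Q)" N] by (simp add: AS MC)
    finally show ?thesis .
  qed
  have rank: "vec_space.rank N Z = s" by (rule rank_left_inv[OF Z Lc LZ])
  define Ai where "Ai = mat_inv A"
  have Ai: "Ai \<in> carrier_mat N N" "Ai * A = 1\<^sub>m N" "A * Ai = 1\<^sub>m N"
    using mat_inv_props[OF A Ainv] unfolding Ai_def by auto
  have PZ: "P * Z = Z"
  proof -
    have "P * Z = Z * (L * Z)" unfolding ZL[symmetric] using Z Lc by (simp add: AS)
    then show ?thesis using LZ Z by simp
  qed
  have AiP: "Ai * P = P * Ai"
  proof -
    have "Ai * P = Ai * P * (A * Ai)" using Ai P by simp
    also have "\<dots> = Ai * (P * A) * Ai" using Ai(1) P A by (simp add: AS)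
    also have "\<dots> = (Ai * A) * P * Ai" unfolding PA using Ai(1) P A by (simp add: AS)
    also have "\<dots> = P * Ai" unfolding Ai(2) using P Ai by simp
    finally show ?thesis .
  qed
  define F where "F = L * (A * Z)"
  define F' where "F' = L * (Ai * Z)"
  have Fc: "F \<in> carrier_mat s s" "F' \<in> carrier_mat s s" unfolding F_def F'_def using Lc A Ai Z by (simp_all add: MC)
  have FF: "F * F' = 1\<^sub>m s"
  proof -
    have "F * F' = L * (A * ((Z * L) * (Ai * Z)))" unfolding F_def F'_def using Lc A Ai Z by (simp add: AS MC)
    also have "\<dots> = L * (A * ((Ai * P) * Z))" unfolding ZL AiP using P Ai Z by (simp add: AS MC)
    also have "\<dots> = L * ((A * Ai) * (P * Z))" using P Ai(1) Z A by (simp add: AS MC)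
    also have "\<dots> = L * Z" using Ai PZ Z by simp
    finally show ?thesis using LZ by simp
  qed
  have AZ: "A * Z = Z * F"
  proof -
    have "Z * F = (Z * L) * (A * Z)" unfolding F_def using Lc A Z by (simp add: AS MC)
    also have "\<dots> = (A * P) * Z" unfolding ZL PA[symmetric] using P A Z by (simp add: AS MC)
    also have "\<dots> = A * Z" using PZ P A Z by (simp add: AS)
    finally show ?thesis by simp
  qed
  define ZH where "ZH = mat_adjoint Z"
  have ZH: "ZH \<in> carrier_mat s N" unfolding ZH_def by (rule adj_carrier[OF Z])
  define E where "E = ZH * A * Z"
  have Ec: "E \<in> carrier_mat s s" unfolding E_def using ZH A Z by (simp add: MC)
  have E2: "E = (ZH * Z) * F"
    unfolding E_def using ZH A Z Fc AZ by (simp add: AS MC)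
  have dE: "det E \<noteq> 0"
    unfolding E2 using det_mult[of "ZH * Z" s F] ZH Z Fc gram_det[OF Z Lc LZ] right_inv_invertible(2)[OF Fc(1) Fc(2) FF]
    unfolding ZH_def by (simp add: MC)
  have Einv: "invertible_mat E" by (rule det_invertible[OF Ec dE])
  define Ei where "Ei = mat_inv E"
  have Ei: "Ei \<in> carrier_mat s s" "Ei * E = 1\<^sub>m s" "E * Ei = 1\<^sub>m s"
    using mat_inv_props[OF Ec Einv] unfolding Ei_def by auto
  define T where "T = A * Z * Ei * ZH"
  have Tc: "T \<in> carrier_mat N N" unfolding T_def using A Z Ei ZH by (simp add: MC)
  have TAP: "T * A * P = A * P"
  proof -
    have "T * A * P = A * (Z * (Ei * (ZH * A * Z) * L))" unfolding T_def ZL[symmetric]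
      using A Z Ei ZH Lc by (simp add: AS MC)
    also have "\<dots> = A * (Z * L)" unfolding E_def[symmetric] using Ei Lc by simp
    finally show ?thesis using ZL by simp
  qed
  have PT: "P * T = T"
  proof -
    have "P * T = (P * A) * Z * Ei * ZH" unfolding T_def using P A Z Ei ZH by (simp add: AS MC)
    also have "\<dots> = A * (P * Z) * Ei * ZH" unfolding PA using P A Z by (simp add: AS MC)
    finally show ?thesis unfolding PZ T_def .
  qed
  have sim: "similar_mat ((1\<^sub>m N - T) * A) (A - P * A)"
    by (rule square_part[OF A Ai(1) P Tc Ai(3) Ai(2) PA TAP PT])
  have AP: "A - P * A = S * (J - B * C * J) * Q"
  proof -
    have BCJ: "B * C * J \<in> carrier_mat N N" using B C J by (simp add: MC)
    have "S * (J - B * C * J) * Q = S * ((J - B * C * J) * Q)" using S J BCJ Q by (simp add: AS minus_carrier_mat)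
    also have "\<dots> = S * (J * Q - B * C * J * Q)" by (subst minus_mult_distrib_mat[OF J BCJ Q]) simp
    also have "\<dots> = S * (J * Q) - S * (B * C * J * Q)"
      by (rule mult_minus_distrib_mat[OF S mult_carrier_mat[OF J Q] mult_carrier_mat[OF BCJ Q]])
    also have "S * (J * Q) = A" unfolding AJ using S J Q by (simp add: AS)
    also have "S * (B * C * J * Q) = P * A" unfolding Pn AJ using S B C J Q QS'[of "J * Q" N] by (simp add: AS MC)
    finally show ?thesis by simp
  qed
  have sim2: "similar_mat (A - P * A) (J - B * C * J)"
    unfolding AP similar_mat_def similar_mat_wit_def Let_def
    by (rule exI[of _ S], rule exI[of _ Q]) (use S Q J B C SQ QS in \<open>auto simp: MC minus_carrier_mat\<close>)
  have "char_poly ((1\<^sub>m N - T) * A) = char_poly (J - B * C * J)"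
    using char_poly_similar[OF similar_mat_trans[OF sim sim2]] .
  then show ?thesis using rank Einv unfolding T_def Ei_def E_def ZH_def by simp
qed


definition multi_affine :: "(('i \<Rightarrow> complex) \<Rightarrow> complex) \<Rightarrow> bool" where
  "multi_affine f \<longleftrightarrow> (\<forall>y i. \<exists>\<alpha> \<beta>. \<forall>t. f (y(i := t)) = \<alpha> + t * \<beta>)"

lemma multi_affine_eq:
  assumes "multi_affine f"
  shows "f (y(i := t)) = f (y(i := 0)) + t * (f (y(i := 1)) - f (y(i := 0)))"
proof -
  obtain \<alpha> \<beta> where "\<forall>t. f (y(i := t)) = \<alpha> + t * \<beta>" using assms unfolding multi_affine_def by blast
  then show ?thesis by (simp add: algebra_simps)
qed

lemma multi_affine_upd:
  assumes "multi_affine f"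
  shows "multi_affine (\<lambda>x. f (x(i := c)))"
  unfolding multi_affine_def
proof (intro allI)
  fix y j
  show "\<exists>\<alpha> \<beta>. \<forall>t. f ((y(j := t))(i := c)) = \<alpha> + t * \<beta>"
  proof (cases "j = i")
    case True
    then show ?thesis by (intro exI[of _ "f (y(i := c))"] exI[of _ 0]) simp
  next
    case False
    then have "\<And>t. (y(j := t))(i := c) = (y(i := c))(j := t)" by (auto simp: fun_upd_twist)
    then show ?thesis using assms unfolding multi_affine_def by metis
  qed
qed

lemma multi_affine_diff:
  assumes "multi_affine f" "multi_affine g"
  shows "multi_affine (\<lambda>x. f x - g x)"
  unfolding multi_affine_def
proof (intro allI)
  fix y i
  obtain a1 b1 where 1: "\<forall>t. f (y(i := t)) = a1 + t * b1" using assms(1) unfolding multi_affine_def by blast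
  obtain a2 b2 where 2: "\<forall>t. g (y(i := t)) = a2 + t * b2" using assms(2) unfolding multi_affine_def by blast
  show "\<exists>\<alpha> \<beta>. \<forall>t. f (y(i := t)) - g (y(i := t)) = \<alpha> + t * \<beta>"
    using 1 2 by (intro exI[of _ "a1 - a2"] exI[of _ "b1 - b2"]) (auto simp: algebra_simps)
qed

lemma affine_zero_set:
  fixes a b :: complex
  shows "{t. a + t * b = 0} = (if b = 0 then (if a = 0 then UNIV else {}) else {- a / b})"
proof (cases "b = 0")
  case False
  have "a + t * b = 0 \<longleftrightarrow> t = - a / b" for t
    using False by (auto simp: field_simps) (metis add.commute neg_eq_iff_add_eq_0)
  then show ?thesis using False by auto
qed simp

lemma null_multi_affine:
  fixes Mi :: "'i \<Rightarrow> complex measure"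
  assumes fin: "finite I"
    and ps: "\<And>i. prob_space (Mi i)"
    and sets: "\<And>i. sets (Mi i) = sets borel"
    and atom: "\<And>i a. emeasure (Mi i) {a} = 0"
  shows "f \<in> borel_measurable (PiM I Mi) \<Longrightarrow> multi_affine f \<Longrightarrow> y0 \<in> space (PiM I Mi) \<Longrightarrow> f y0 \<noteq> 0
     \<Longrightarrow> emeasure (PiM I Mi) {y \<in> space (PiM I Mi). f y = 0} = 0"
  using fin
proof (induct I arbitrary: f y0 rule: finite_induct)
  case empty
  then have "space (PiM {} Mi) = {\<lambda>_. undefined}" by (simp add: space_PiM)
  with empty have e: "{y \<in> space (PiM {} Mi). f y = 0} = {}" by auto
  show ?case unfolding e by simp
next
  case (insert i I)
  have sp: "\<And>j. space (Mi j) = UNIV" using sets by (metis sets_eq_imp_space_eq space_borel)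
  interpret product_sigma_finite Mi
    unfolding product_sigma_finite_def
    using ps by (auto intro: prob_space_imp_sigma_finite)
  define a where "a x = f (x(i := 0))" for x
  define b where "b x = f (x(i := 1)) - f (x(i := 0))" for x
  have fab: "f (x(i := t)) = a x + t * b x" for x t
    unfolding a_def b_def using multi_affine_eq[OF insert(5)] .
  have upd_meas: "(\<lambda>x. x(i := c)) \<in> PiM I Mi \<rightarrow>\<^sub>M PiM (insert i I) Mi" for c
    by (rule measurable_fun_upd[where J = I]) (auto simp: sets measurable_ident_sets sp intro!: measurable_const)
  have am: "a \<in> borel_measurable (PiM I Mi)" unfolding a_def
    using measurable_comp[OF upd_meas insert(4)] by (simp add: comp_def)
  have bm: "b \<in> borel_measurable (PiM I Mi)" unfolding b_def
    using measurable_comp[OF upd_meas insert(4)] by (simp add: comp_def)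
  have maa: "multi_affine a" unfolding a_def by (rule multi_affine_upd[OF insert(5)])
  have mab: "multi_affine b" unfolding b_def by (intro multi_affine_diff multi_affine_upd insert(5))
  define X where "X = {y \<in> space (PiM (insert i I) Mi). f y = 0}"
  have Xm: "X \<in> sets (PiM (insert i I) Mi)" unfolding X_def using insert(4) by measurable
  have "emeasure (PiM (insert i I) Mi) X = (\<integral>\<^sup>+ y. indicator X y \<partial>PiM (insert i I) Mi)"
    using Xm by simp
  also have "\<dots> = (\<integral>\<^sup>+ x. \<integral>\<^sup>+ t. indicator X (x(i := t)) \<partial>Mi i \<partial>PiM I Mi)"
    by (rule product_nn_integral_insert[OF insert(1,2)]) (use Xm in measurable)
  also have "\<dots> = (\<integral>\<^sup>+ x. indicator {x \<in> space (PiM I Mi). a x = 0 \<and> b x = 0} x \<partial>PiM I Mi)"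
  proof (rule nn_integral_cong)
    fix x assume x: "x \<in> space (PiM I Mi)"
    have "x(i := t) \<in> space (PiM (insert i I) Mi)" for t
      using x insert(2) by (auto simp: space_PiM sp PiE_def extensional_def)
    then have "indicator X (x(i := t)) = (indicator {t. a x + t * b x = 0} t :: ennreal)" for t
      unfolding X_def using fab by (auto simp: indicator_def)
    then have "(\<integral>\<^sup>+ t. indicator X (x(i := t)) \<partial>Mi i) = emeasure (Mi i) {t. a x + t * b x = 0}"
      by (simp add: nn_integral_indicator sets)
    also have "\<dots> = indicator {x \<in> space (PiM I Mi). a x = 0 \<and> b x = 0} x"
      unfolding affine_zero_set using x atom prob_space.emeasure_space_1[OF ps] sp
      by (auto simp: indicator_def)
    finally show "(\<integral>\<^sup>+ t. indicator X (x(i := t)) \<partial>Mi i) = indicator {x \<in> space (PiM I Mi). a x = 0 \<and> b x = 0} x" .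
  qed
  also have "\<dots> = emeasure (PiM I Mi) {x \<in> space (PiM I Mi). a x = 0 \<and> b x = 0}"
    by (rule nn_integral_indicator) (use am bm in measurable)
  also have "\<dots> = 0"
  proof -
    define x0 where "x0 = y0(i := undefined)"
    have x0: "x0 \<in> space (PiM I Mi)" using insert(6) insert(2)
      unfolding x0_def by (auto simp: space_PiM sp PiE_def extensional_def)
    have "x0(i := y0 i) = y0" unfolding x0_def by simp
    then have "a x0 + y0 i * b x0 \<noteq> 0" using fab[of x0 "y0 i"] insert(7) by simp
    then have "a x0 \<noteq> 0 \<or> b x0 \<noteq> 0" by auto
    then show ?thesis
    proof
      assume "a x0 \<noteq> 0"
      then have "emeasure (PiM I Mi) {x \<in> space (PiM I Mi). a x = 0} = 0"
        using insert(3)[OF am maa x0] by simp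
      then show ?thesis
        by (rule emeasure_eq_0[rotated]) (use am bm in \<open>auto\<close>)
    next
      assume "b x0 \<noteq> 0"
      then have "emeasure (PiM I Mi) {x \<in> space (PiM I Mi). b x = 0} = 0"
        using insert(3)[OF bm mab x0] by simp
      then show ?thesis
        by (rule emeasure_eq_0[rotated]) (use am bm in \<open>auto\<close>)
    qed
  qed
  finally show ?case unfolding X_def .
qed


lemma ae_nonzero:
  fixes M :: "'w measure" and Y :: "'i \<Rightarrow> 'w \<Rightarrow> complex"
  assumes prob: "prob_space M" and fin: "finite I" and ne: "I \<noteq> {}"
    and indep: "prob_space.indep_vars M (\<lambda>_. borel) Y I"
    and ac: "\<forall>i\<in>I. absolutely_continuous lborel (distr M lborel (Y i))"
    and fm: "f \<in> borel_measurable (PiM I (\<lambda>_. borel))"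
    and ma: "multi_affine f" and y0: "y0 \<in> space (PiM I (\<lambda>_. borel))" and f0: "f y0 \<noteq> 0"
  shows "AE \<omega> in M. f (\<lambda>i\<in>I. Y i \<omega>) \<noteq> 0"
proof -
  interpret prob_space M by (rule prob)
  have rv: "\<And>i. i \<in> I \<Longrightarrow> Y i \<in> borel_measurable M"
    using indep unfolding indep_vars_def by auto
  obtain i0 where i0: "i0 \<in> I" using ne by auto
  define Y' where "Y' i = (if i \<in> I then Y i else Y i0)" for i
  have Y'm: "Y' i \<in> borel_measurable M" for i unfolding Y'_def using rv i0 by auto
  have indep': "indep_vars (\<lambda>_. borel) Y' I"
    using indep by (subst indep_vars_cong[of I I Y' Y]) (auto simp: Y'_def)
  define Mi where "Mi i = distr M borel (Y' i)" for i
  have ps: "prob_space (Mi i)" for i unfolding Mi_def by (rule prob_space_distr[OF Y'm])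
  have sets: "sets (Mi i) = sets borel" for i unfolding Mi_def by simp
  have atom: "emeasure (Mi i) {a} = 0" for i a
  proof -
    obtain j where j: "j \<in> I" "Y' i = Y j"
    proof (cases "i \<in> I")
      case True then show ?thesis using that[of i] unfolding Y'_def by auto
    next
      case False then show ?thesis using that[of i0] i0 unfolding Y'_def by auto
    qed
    have "{a} \<in> null_sets lborel" by (rule countable_imp_null_set_lborel) simp
    then have "{a} \<in> null_sets (distr M lborel (Y j))" using ac j unfolding absolutely_continuous_def by auto
    then have "emeasure M (Y j -` {a} \<inter> space M) = 0"
      using rv[OF j(1)] by (simp add: emeasure_distr null_sets_def)
    then show ?thesis unfolding Mi_def j(2) using rv[OF j(1)] by (simp add: emeasure_distr)
  qed
  have deq: "distr M (PiM I (\<lambda>_. borel)) (\<lambda>x. \<lambda>i\<in>I. Y' i x) = PiM I Mi"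
    using indep' unfolding Mi_def by (subst (asm) indep_vars_iff_distr_eq_PiM[OF ne Y'm]) simp
  have setsP: "sets (PiM I Mi) = sets (PiM I (\<lambda>_. borel))" by (rule sets_PiM_cong) (auto simp: sets)
  have fm': "f \<in> borel_measurable (PiM I Mi)" using fm by (simp add: measurable_cong_sets[OF setsP refl])
  have y0': "y0 \<in> space (PiM I Mi)" using y0 sets_eq_imp_space_eq[OF setsP] by simp
  define Nn where "Nn = {y \<in> space (PiM I Mi). f y = 0}"
  have N0: "emeasure (PiM I Mi) Nn = 0" unfolding Nn_def
    by (rule null_multi_affine[OF fin ps sets atom fm' ma y0' f0])
  have Nm: "Nn \<in> sets (PiM I Mi)" unfolding Nn_def using fm' by measurable
  define g where "g x = (\<lambda>i\<in>I. Y' i x)" for x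
  have gm: "g \<in> M \<rightarrow>\<^sub>M PiM I (\<lambda>_. borel)" unfolding g_def by (rule measurable_restrict) (use Y'm in auto)
  have "emeasure M (g -` Nn \<inter> space M) = emeasure (distr M (PiM I (\<lambda>_. borel)) g) Nn"
    using Nm setsP gm by (simp add: emeasure_distr)
  also have "\<dots> = 0" using deq N0 unfolding g_def by simp
  finally have null: "g -` Nn \<inter> space M \<in> null_sets M"
    using Nm setsP gm by (auto simp: null_sets_def intro!: measurable_sets)
  show ?thesis
  proof (rule AE_I'[OF null], safe)
    fix x assume x: "x \<in> space M" and fx: "f (\<lambda>i\<in>I. Y i x) = 0"
    have e: "g x = (\<lambda>i\<in>I. Y i x)" unfolding g_def Y'_def by (auto simp: restrict_def)
    have "g x \<in> space (PiM I Mi)" using measurable_space[OF gm x] sets_eq_imp_space_eq[OF setsP] by simp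
    then show "x \<in> g -` Nn" unfolding Nn_def using e fx by simp
  qed
qed


definition ya :: "nat \<Rightarrow> nat \<Rightarrow> (nat \<times> nat \<Rightarrow> complex) \<Rightarrow> nat \<Rightarrow> nat \<Rightarrow> complex" where
  "ya N s y k j = (if (k,j) \<in> {0..<N} \<times> {0..<s} then y (k,j) else 0)"

definition fmat :: "complex mat \<Rightarrow> nat \<Rightarrow> nat \<Rightarrow> (nat \<times> nat \<Rightarrow> complex) \<Rightarrow> complex mat" where
  "fmat H N s y = mat s s (\<lambda>(r,j). \<Sum>k<N. H $$ (r,k) * ya N s y k j)"

definition fdet :: "complex mat \<Rightarrow> nat \<Rightarrow> nat \<Rightarrow> (nat \<times> nat \<Rightarrow> complex) \<Rightarrow> complex" where
  "fdet H N s y = det (fmat H N s y)"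

lemma fdet_affine: "multi_affine (fdet H N s)"
  unfolding multi_affine_def
proof (intro allI)
  fix y :: "nat \<times> nat \<Rightarrow> complex" and i :: "nat \<times> nat"
  obtain k0 j0 where i: "i = (k0, j0)" by force
  show "\<exists>\<alpha> \<beta>. \<forall>t. fdet H N s (y(i := t)) = \<alpha> + t * \<beta>"
  proof (cases "k0 < N \<and> j0 < s")
    case False
    then have "ya N s (y(i := t)) = ya N s y" for t unfolding i ya_def by (auto simp: fun_eq_iff)
    then show ?thesis unfolding fdet_def fmat_def by (intro exI[of _ "fdet H N s y"] exI[of _ 0]) (simp add: fdet_def fmat_def)
  next
    case True
    define F where "F t = fmat H N s (y(i := t))" for t
    have FC: "F t \<in> carrier_mat s s" for t unfolding F_def fmat_def by auto
    have del: "mat_delete (F t) r j0 = mat_delete (F 0) r j0" for t r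
      unfolding mat_delete_def F_def fmat_def
      by (intro eq_matI) (auto simp: i ya_def intro!: sum.cong)
    have col: "F t $$ (r, j0) = F 0 $$ (r, j0) + t * H $$ (r, k0)" if "r < s" for t r
    proof -
      have "H $$ (r,k) * ya N s (y(i := t)) k j0 = H $$ (r,k) * ya N s (y(i := 0)) k j0 + (if k = k0 then H $$ (r,k) * t else 0)" if "k < N" for k
        using that True unfolding i ya_def by auto
      moreover have "F t $$ (r, j0) = (\<Sum>k<N. H $$ (r,k) * ya N s (y(i := t)) k j0)"
        unfolding F_def fmat_def using \<open>r < s\<close> True by simp
      ultimately have "F t $$ (r, j0) = (\<Sum>k<N. H $$ (r,k) * ya N s (y(i := 0)) k j0 + (if k = k0 then H $$ (r,k) * t else 0))"
        by simp
      also have "\<dots> = F 0 $$ (r, j0) + t * H $$ (r, k0)"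
        unfolding F_def fmat_def using \<open>r < s\<close> True by (simp add: sum.distrib mult.commute)
      finally show ?thesis .
    qed
    have "fdet H N s (y(i := t)) = (\<Sum>r<s. F 0 $$ (r,j0) * cofactor (F 0) r j0) + t * (\<Sum>r<s. H $$ (r,k0) * cofactor (F 0) r j0)" for t
    proof -
      have "fdet H N s (y(i := t)) = (\<Sum>r<s. F t $$ (r,j0) * cofactor (F t) r j0)"
        unfolding fdet_def F_def[symmetric] by (rule laplace_expansion_column[OF FC]) (use True in auto)
      also have "\<dots> = (\<Sum>r<s. (F 0 $$ (r, j0) + t * H $$ (r, k0)) * cofactor (F 0) r j0)"
        unfolding cofactor_def by (intro sum.cong refl) (simp add: del[of t] col[of _ t])
      finally show ?thesis by (simp add: algebra_simps sum.distrib sum_distrib_left)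
    qed
    then show ?thesis by blast
  qed
qed

lemma ya_meas: "(\<lambda>y. ya N s y k j) \<in> borel_measurable (PiM ({0..<N} \<times> {0..<s}) (\<lambda>_. borel))"
proof (cases "(k,j) \<in> {0..<N} \<times> {0..<s}")
  case True
  then show ?thesis unfolding ya_def by simp
next
  case False
  then have "(\<lambda>y. ya N s y k j) = (\<lambda>y. 0)" unfolding ya_def by (auto simp: fun_eq_iff)
  then show ?thesis by simp
qed

lemma fdet_meas: "fdet H N s \<in> borel_measurable (PiM ({0..<N} \<times> {0..<s}) (\<lambda>_. borel))"
proof -
  have e: "fdet H N s y = (\<Sum>p \<in> {p. p permutes {0..<s}}. signof p * (\<Prod>r = 0..<s. \<Sum>k<N. H $$ (r,k) * ya N s y k (p r)))" for y
    unfolding fdet_def fmat_def det_def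
    by (auto intro!: sum.cong prod.cong arg_cong2[where f = "(*)"] simp: permutes_in_image)
  show ?thesis unfolding e[abs_def]
    by (intro borel_measurable_sum borel_measurable_times borel_measurable_prod borel_measurable_const ya_meas)
qed

lemma fdet_eval:
  assumes H: "H \<in> carrier_mat s N"
  shows "fdet H N s (\<lambda>ij\<in>{0..<N} \<times> {0..<s}. Yf ij) = det (H * mat N s Yf)"
proof -
  have "fmat H N s (\<lambda>ij\<in>{0..<N} \<times> {0..<s}. Yf ij) = H * mat N s Yf"
    unfolding fmat_def ya_def using H by (intro eq_matI) (auto simp: scalar_prod_def intro!: sum.cong)
  then show ?thesis unfolding fdet_def by simp
qed


definition selC :: "nat list \<Rightarrow> nat \<Rightarrow> complex mat" where
  "selC idx N = mat (length idx) N (\<lambda>(r,j). if j = idx ! r then 1 else 0)"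
definition selB :: "nat list \<Rightarrow> nat \<Rightarrow> complex mat" where
  "selB idx N = mat N (length idx) (\<lambda>(i,r). if i = idx ! r then 1 else 0)"

lemma selector:
  assumes d: "distinct idx" and b: "set idx \<subseteq> {0..<N}"
  shows "selC idx N * selB idx N = 1\<^sub>m (length idx)"
    "selB idx N * selC idx N = mat N N (\<lambda>(i,j). if i = j \<and> i \<in> set idx then 1 else 0)"
proof -
  show "selC idx N * selB idx N = 1\<^sub>m (length idx)"
  proof (rule eq_matI)
    fix r r' assume r: "r < dim_row (1\<^sub>m (length idx) :: complex mat)" "r' < dim_col (1\<^sub>m (length idx) :: complex mat)"
    then have r: "r < length idx" "r' < length idx" by auto
    have lt: "idx ! r < N" using b r(1) nth_mem by fastforce
    have "(selC idx N * selB idx N) $$ (r, r') = (\<Sum>k\<in>{0..<N}. (if k = idx ! r then 1 else 0) * (if k = idx ! r' then 1 else 0))"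
      unfolding selC_def selB_def using r by (simp add: scalar_prod_def)
    also have "\<dots> = (\<Sum>k\<in>{0..<N}. if k = idx ! r then (if idx ! r = idx ! r' then 1 else 0) else 0)"
      by (intro sum.cong) auto
    also have "\<dots> = (if idx ! r = idx ! r' then 1 else 0)" using lt by simp
    also have "\<dots> = (if r = r' then 1 else 0)" using d r nth_eq_iff_index_eq by auto
    finally show "(selC idx N * selB idx N) $$ (r, r') = 1\<^sub>m (length idx) $$ (r, r')" using r by simp
  qed (auto simp: selC_def selB_def)
  show "selB idx N * selC idx N = mat N N (\<lambda>(i,j). if i = j \<and> i \<in> set idx then 1 else 0)"
  proof (rule eq_matI)
    fix i j assume ij: "i < dim_row (mat N N (\<lambda>(i,j). if i = j \<and> i \<in> set idx then 1 else (0::complex)))"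
      "j < dim_col (mat N N (\<lambda>(i,j). if i = j \<and> i \<in> set idx then 1 else (0::complex)))"
    then have ij: "i < N" "j < N" by auto
    have "(selB idx N * selC idx N) $$ (i, j) = (\<Sum>r\<in>{0..<length idx}. if idx ! r = i then (if j = i then 1 else 0) else 0)"
      unfolding selC_def selB_def using ij by (auto simp: scalar_prod_def intro!: sum.cong)
    also have "\<dots> = (if i = j \<and> i \<in> set idx then 1 else 0)"
    proof (cases "i \<in> set idx")
      case True
      then obtain r0 where r0: "r0 < length idx" "idx ! r0 = i" by (auto simp: in_set_conv_nth)
      have "\<And>r. r < length idx \<Longrightarrow> idx ! r = i \<longleftrightarrow> r = r0" using d r0 nth_eq_iff_index_eq by metis
      then have "(\<Sum>r\<in>{0..<length idx}. if idx ! r = i then (if j = i then 1 else 0) else 0) =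
          (\<Sum>r\<in>{0..<length idx}. if r = r0 then (if j = i then 1 else 0) else (0::complex))"
        by (intro sum.cong) auto
      then show ?thesis using True r0 by auto
    next
      case False
      then have "\<And>r. r < length idx \<Longrightarrow> idx ! r \<noteq> i" by auto
      then show ?thesis using False by simp
    qed
    finally show "(selB idx N * selC idx N) $$ (i, j) = mat N N (\<lambda>(i,j). if i = j \<and> i \<in> set idx then 1 else 0) $$ (i, j)"
      using ij by simp
  qed (auto simp: selC_def selB_def)
qed

lemma selC_carrier: "selC idx N \<in> carrier_mat (length idx) N" unfolding selC_def by auto
lemma selB_carrier: "selB idx N \<in> carrier_mat N (length idx)" unfolding selB_def by auto

lemma count_inside:
  "length (filter P (concat (map (\<lambda>(n,a). replicate n a) n_as))) = sum_list (map fst (filter (\<lambda>(n,a). P a) n_as))"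
  by (induct n_as) (auto simp: filter_replicate)

lemma prod_diag:
  fixes n_as :: "(nat \<times> complex) list"
  assumes "\<forall>(n,a) \<in> set n_as. a \<in> X \<or> a \<in> Y" and "X \<inter> Y = {}"
  shows "(\<Prod>a \<leftarrow> map (\<lambda>a. if a \<in> X then 0 else a) (concat (map (\<lambda>(n,a). replicate n a) n_as)). [:- a, 1:])
     = [:0, 1:] ^ sum_list (map fst (filter (\<lambda>(n,a). a \<in> X) n_as)) *
       (\<Prod>(n, a) \<leftarrow> filter (\<lambda>(n, a). a \<in> Y) n_as. [:- a, 1:] ^ n)"
  using assms(1)
proof (induct n_as)
  case Nil
  then show ?case by simp
next
  case (Cons na n_as)
  obtain n a where na: "na = (n,a)" by force
  have ih: "(\<Prod>a \<leftarrow> map (\<lambda>a. if a \<in> X then 0 else a) (concat (map (\<lambda>(n,a). replicate n a) n_as)). [:- a, 1:])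
     = [:0, 1:] ^ sum_list (map fst (filter (\<lambda>(n,a). a \<in> X) n_as)) *
       (\<Prod>(n, a) \<leftarrow> filter (\<lambda>(n, a). a \<in> Y) n_as. [:- a, 1:] ^ n)" using Cons by auto
  have ay: "a \<in> X \<or> a \<in> Y" using Cons(2) na by auto
  show ?case
  proof (cases "a \<in> X")
    case True
    then have "a \<notin> Y" using assms(2) by auto
    then show ?thesis unfolding na using True ih by (simp add: power_add mult_ac)
  next
    case False
    then have "a \<in> Y" using ay by auto
    then show ?thesis unfolding na using False ih by (simp add: mult_ac)
  qed
qed

lemma dmat_comm:
  fixes J :: "complex mat"
  assumes js: "jstruct J N" and D: "D = mat N N (\<lambda>(i,j). if i = j \<and> pr i then 1 else 0)"
    and pr: "\<And>i j. i < N \<Longrightarrow> j < N \<Longrightarrow> J $$ (i,i) = J $$ (j,j) \<Longrightarrow> pr i = pr j"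
  shows "D * J = J * D" "\<And>i j. i < N \<Longrightarrow> j < N \<Longrightarrow> (D * J) $$ (i,j) = (if pr i then J $$ (i,j) else 0)"
proof -
  have J: "J \<in> carrier_mat N N" using js unfolding jstruct_def by auto
  have DJ: "(D * J) $$ (i,j) = (if pr i then J $$ (i,j) else 0)" if "i < N" "j < N" for i j
  proof -
    have "(D * J) $$ (i,j) = (\<Sum>k\<in>{0..<N}. (if i = k \<and> pr i then 1 else 0) * J $$ (k,j))"
      unfolding D using that J by (simp add: scalar_prod_def)
    also have "\<dots> = (\<Sum>k\<in>{0..<N}. if k = i then (if pr i then J $$ (i,j) else 0) else 0)"
      by (intro sum.cong) auto
    finally show ?thesis using that by simp
  qed
  have JD: "(J * D) $$ (i,j) = (if pr j then J $$ (i,j) else 0)" if "i < N" "j < N" for i j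
  proof -
    have "(J * D) $$ (i,j) = (\<Sum>k\<in>{0..<N}. J $$ (i,k) * (if k = j \<and> pr k then 1 else 0))"
      unfolding D using that J by (simp add: scalar_prod_def)
    also have "\<dots> = (\<Sum>k\<in>{0..<N}. if k = j then (if pr j then J $$ (i,j) else 0) else 0)"
      by (intro sum.cong) auto
    finally show ?thesis using that by simp
  qed
  show "D * J = J * D"
  proof (rule eq_matI)
    fix i j assume "i < dim_row (J * D)" "j < dim_col (J * D)"
    then have ij: "i < N" "j < N" using J D by auto
    show "(D * J) $$ (i,j) = (J * D) $$ (i,j)"
    proof (cases "J $$ (i,j) = 0")
      case False
      then have "J $$ (i,i) = J $$ (j,j)" using js ij unfolding jstruct_def by auto
      then show ?thesis using DJ[OF ij] JD[OF ij] pr[OF ij] by simp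
    qed (use DJ[OF ij] JD[OF ij] in simp)
  qed (use J D in auto)
  show "\<And>i j. i < N \<Longrightarrow> j < N \<Longrightarrow> (D * J) $$ (i,j) = (if pr i then J $$ (i,j) else 0)" by (rule DJ)
qed


theorem mainTheorem3:
  fixes A :: "complex mat" and N :: nat
    and n_as :: "(nat \<times> complex) list"
    and \<Gamma> :: "real \<Rightarrow> complex"
    and M :: "'w measure"
    and Y :: "nat \<times> nat \<Rightarrow> 'w \<Rightarrow> complex"
    and s :: nat
  assumes A: "A \<in> carrier_mat N N"
    and nonsing: "invertible_mat A"
    and jnf: "jordan_nf A n_as"
    and curve: "pos_simple_closed_curve \<Gamma>"
    and no_eig_on: "\<forall>(n, a) \<in> set n_as. a \<notin> path_image \<Gamma>"
    and in_or_out: "\<forall>(n, a) \<in> set n_as.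
                      a \<in> inside (path_image \<Gamma>) \<or> a \<in> outside (path_image \<Gamma>)"
    and k_pos: "\<exists>(n, a) \<in> set n_as. a \<in> inside (path_image \<Gamma>)"
    and k_lt_d: "\<exists>(n, a) \<in> set n_as. a \<in> outside (path_image \<Gamma>)"
    and s_def: "s = sum_list (map fst (filter (\<lambda>(n, a). a \<in> inside (path_image \<Gamma>)) n_as))"
    and prob: "prob_space M"
    and indep: "prob_space.indep_vars M (\<lambda>_. borel) Y ({0..<N} \<times> {0..<s})"
    and abs_cont: "\<forall>ij \<in> {0..<N} \<times> {0..<s}.
                     absolutely_continuous lborel (distr M lborel (Y ij))"
  shows "AE \<omega> in M.
     (let Ym = mat N s (\<lambda>(i, j). Y (i, j) \<omega>);
          Z = riesz_proj \<Gamma> N A * Ym;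
          ZH = mat_adjoint Z
      in vec_space.rank N Z = s
         \<and> invertible_mat (ZH * A * Z)
         \<and> char_poly ((1\<^sub>m N - A * Z * mat_inv (ZH * A * Z) * ZH) * A)
             = monom 1 s * (\<Prod>(n, a) \<leftarrow> filter (\<lambda>(n, a). a \<in> outside (path_image \<Gamma>)) n_as.
                              [:- a, 1:] ^ n))"
proof -
  define ins where "ins = inside (path_image \<Gamma>)"
  define out where "out = outside (path_image \<Gamma>)"
  define J where "J = jordan_matrix n_as"
  from jnf have sim: "similar_mat A J" and n0: "0 \<notin> fst ` set n_as" unfolding jordan_nf_def J_def by auto
  then obtain S Q where wit: "similar_mat_wit A J S Q" unfolding similar_mat_def by auto
  have all: "{A, J, S, Q} \<subseteq> carrier_mat N N \<and> S * Q = 1\<^sub>m N \<and> Q * S = 1\<^sub>m N \<and> A = S * J * Q"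
    using wit unfolding similar_mat_wit_def Let_def carrier_matD(1)[OF A] .
  have S: "S \<in> carrier_mat N N" and Q: "Q \<in> carrier_mat N N" and Jc: "J \<in> carrier_mat N N"
    using all[THEN conjunct1] by simp_all
  have SQ: "S * Q = 1\<^sub>m N" and QS: "Q * S = 1\<^sub>m N" and AJ: "A = S * J * Q"
    using all by simp_all
  have Nsum: "N = sum_list (map fst n_as)" using Jc unfolding J_def by auto
  have js: "jstruct J N" unfolding jstruct_def
  proof (rule conjI[OF Jc], intro allI impI)
    fix k l assume kl: "k < N" "l < N" "J $$ (k,l) \<noteq> 0"
    show "J $$ (k,k) = J $$ (l,l) \<and> k \<le> l"
      using jordan_struct[of k n_as l] kl unfolding J_def[symmetric] Nsum[symmetric] by blast
  qed
  have dJ: "diag_mat J = concat (map (\<lambda>(n,a). replicate n a) n_as)" unfolding J_def by (rule jordan_diag)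
  have diagJ: "\<exists>(n,a) \<in> set n_as. J $$ (i,i) = a" if "i < N" for i
  proof -
    have "J $$ (i,i) \<in> set (diag_mat J)" using that Jc unfolding diag_mat_def by auto
    then show ?thesis unfolding dJ by auto
  qed
  have noe: "J $$ (i,i) \<notin> path_image \<Gamma>" if "i < N" for i using diagJ[OF that] no_eig_on by auto
  have io: "J $$ (i,i) \<in> ins \<or> J $$ (i,i) \<in> out" if "i < N" for i
    using diagJ[OF that] in_or_out unfolding ins_def out_def by auto
  have riesz: "riesz_proj \<Gamma> N A = S * dmat J N \<Gamma> * Q"
    by (rule riesz_eq[OF S Q js SQ QS AJ curve noe io[unfolded ins_def out_def]])
  define idx where "idx = filter (\<lambda>i. J $$ (i,i) \<in> ins) [0..<N]"
  have s_len: "s = length idx"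
  proof -
    have "length idx = length (filter (\<lambda>a. a \<in> ins) (diag_mat J))"
      unfolding idx_def diag_mat_def using Jc by (simp add: filter_map comp_def)
    also have "\<dots> = s" unfolding dJ count_inside s_def ins_def by simp
    finally show ?thesis by simp
  qed
  define C where "C = selC idx N"
  define B where "B = selB idx N"
  have Cc: "C \<in> carrier_mat s N" unfolding C_def s_len by (rule selC_carrier)
  have Bc: "B \<in> carrier_mat N s" unfolding B_def s_len by (rule selB_carrier)
  have didx: "distinct idx" "set idx \<subseteq> {0..<N}" unfolding idx_def by auto
  have CB: "C * B = 1\<^sub>m s" unfolding C_def B_def s_len by (rule selector(1)[OF didx])
  have dmat_eq: "dmat J N \<Gamma> = mat N N (\<lambda>(i,j). if i = j \<and> J $$ (i,i) \<in> ins then 1 else 0)"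
    unfolding dmat_def ins_def ..
  have BC: "B * C = dmat J N \<Gamma>"
    unfolding B_def C_def selector(2)[OF didx] dmat_eq
    by (intro eq_matI) (auto simp: idx_def)
  have pr: "\<And>i j. i < N \<Longrightarrow> j < N \<Longrightarrow> J $$ (i,i) = J $$ (j,j) \<Longrightarrow> (J $$ (i,i) \<in> ins) = (J $$ (j,j) \<in> ins)"
    by simp
  have dc1: "dmat J N \<Gamma> * J = J * dmat J N \<Gamma>"
    by (rule dmat_comm(1)[OF js dmat_eq]) simp
  have dc2: "(dmat J N \<Gamma> * J) $$ (i,j) = (if J $$ (i,i) \<in> ins then J $$ (i,j) else 0)" if "i < N" "j < N" for i j
    by (rule dmat_comm(2)[OF js dmat_eq _ that]) simp
  have DJ: "B * C * J = J * (B * C)" unfolding BC using dc1 .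
  have charJ: "char_poly (J - B * C * J) = monom 1 s * (\<Prod>(n, a) \<leftarrow> filter (\<lambda>(n, a). a \<in> out) n_as. [:- a, 1:] ^ n)"
  proof -
    have DJc: "dmat J N \<Gamma> * J \<in> carrier_mat N N" unfolding dmat_def using Jc by auto
    have X: "J - dmat J N \<Gamma> * J \<in> carrier_mat N N" by (rule minus_carrier_mat[OF DJc])
    have ut: "upper_triangular (J - dmat J N \<Gamma> * J)"
      unfolding upper_triangular_def
    proof (intro allI impI)
      fix i j assume ij: "i < dim_row (J - dmat J N \<Gamma> * J)" "j < i"
      then have "i < N" "j < N" using Jc by (auto simp: dmat_def)
      moreover have "J $$ (i,j) = 0"
      proof (rule ccontr)
        assume "J $$ (i,j) \<noteq> 0"
        then have "i \<le> j" using js \<open>i < N\<close> \<open>j < N\<close> unfolding jstruct_def by blast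
        then show False using ij(2) by simp
      qed
      ultimately have ijN: "i < N" "j < N" and J0: "J $$ (i,j) = 0" by auto
      have "(J - dmat J N \<Gamma> * J) $$ (i,j) = J $$ (i,j) - (dmat J N \<Gamma> * J) $$ (i,j)"
        using DJc ijN by (intro index_minus_mat) auto
      also have "\<dots> = 0" using dc2[OF ijN] J0 by simp
      finally show "(J - dmat J N \<Gamma> * J) $$ (i,j) = 0" .
    qed
    have dg: "diag_mat (J - dmat J N \<Gamma> * J) = map (\<lambda>a. if a \<in> ins then 0 else a) (diag_mat J)"
    proof (rule nth_equalityI)
      show "length (diag_mat (J - dmat J N \<Gamma> * J)) = length (map (\<lambda>a. if a \<in> ins then 0 else a) (diag_mat J))"
        using Jc DJc by (simp add: diag_mat_def dmat_def)
      fix i assume "i < length (diag_mat (J - dmat J N \<Gamma> * J))"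
      then have i: "i < N" using Jc DJc by (simp add: diag_mat_def dmat_def)
      then show "diag_mat (J - dmat J N \<Gamma> * J) ! i = map (\<lambda>a. if a \<in> ins then 0 else a) (diag_mat J) ! i"
      proof -
        have "(J - dmat J N \<Gamma> * J) $$ (i,i) = J $$ (i,i) - (dmat J N \<Gamma> * J) $$ (i,i)"
          using DJc i by (intro index_minus_mat) auto
        also have "\<dots> = (if J $$ (i,i) \<in> ins then 0 else J $$ (i,i))" using dc2[OF i i] by simp
        finally show ?thesis using i Jc DJc by (simp add: diag_mat_def dmat_def)
      qed
    qed
    have disj: "ins \<inter> out = {}" unfolding ins_def out_def by (rule inside_Int_outside)
    have io2: "\<forall>(n,a) \<in> set n_as. a \<in> ins \<or> a \<in> out" using in_or_out unfolding ins_def out_def .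
    have "char_poly (J - dmat J N \<Gamma> * J) = (\<Prod>a \<leftarrow> diag_mat (J - dmat J N \<Gamma> * J). [:- a, 1:])"
      by (rule char_poly_upper_triangular[OF X ut])
    also have "\<dots> = [:0, 1:] ^ s * (\<Prod>(n, a) \<leftarrow> filter (\<lambda>(n, a). a \<in> out) n_as. [:- a, 1:] ^ n)"
      unfolding dg dJ by (rule trans[OF prod_diag[OF io2 disj]]) (simp add: s_def ins_def)
    finally show ?thesis unfolding BC by (simp add: monom_altdef)
  qed
  define I0 where "I0 = {0..<N} \<times> {0..<s}"
  obtain n1 a1 where na1: "(n1, a1) \<in> set n_as" "a1 \<in> ins" using k_pos unfolding ins_def by auto
  have n1: "n1 > 0" using n0 na1(1) by (metis fst_conv image_eqI neq0_conv)
  have "n1 \<le> s" unfolding s_def using na1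
    by (intro member_le_sum_list) (auto simp: ins_def image_iff intro!: bexI[of _ "(n1, a1)"])
  moreover have "n1 \<le> N" unfolding Nsum using na1 by (intro member_le_sum_list) (auto simp: image_iff intro!: bexI[of _ "(n1, a1)"])
  ultimately have sN: "s > 0" "N > 0" using n1 by auto
  have I0ne: "I0 \<noteq> {}" unfolding I0_def using sN by auto
  define H where "H = C * Q"
  have Hc: "H \<in> carrier_mat s N" unfolding H_def using Cc Q by simp
  define y0 where "y0 = (\<lambda>ij\<in>I0. (S * B) $$ ij)"
  have y0s: "y0 \<in> space (PiM I0 (\<lambda>_. borel))" unfolding y0_def by (simp add: space_PiM)
  have SB: "mat N s (\<lambda>ij. (S * B) $$ ij) = S * B" using S Bc by (intro eq_matI) auto
  have "fdet H N s y0 = det (H * (S * B))" unfolding y0_def I0_def fdet_eval[OF Hc] SB ..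
  also have "H * (S * B) = C * B"
  proof -
    have "H * (S * B) = C * (Q * (S * B))" unfolding H_def by (rule assoc_mult_mat[OF Cc Q mult_carrier_mat[OF S Bc]])
    also have "Q * (S * B) = (Q * S) * B" by (rule assoc_mult_mat[OF Q S Bc, symmetric])
    also have "\<dots> = B" unfolding QS by (rule left_mult_one_mat[OF Bc])
    finally show ?thesis .
  qed
  finally have f0: "fdet H N s y0 \<noteq> 0" using CB by simp
  have ae: "AE \<omega> in M. fdet H N s (\<lambda>ij\<in>I0. Y ij \<omega>) \<noteq> 0"
    by (rule ae_nonzero[OF prob _ I0ne indep[folded I0_def] abs_cont[folded I0_def] fdet_meas[of H N s, folded I0_def]
        fdet_affine y0s f0]) (simp add: I0_def)
  show ?thesis
  proof (rule AE_mp[OF ae], rule AE_I2, intro impI)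
    fix \<omega> assume nz: "fdet H N s (\<lambda>ij\<in>I0. Y ij \<omega>) \<noteq> 0"
    define Ym where "Ym = mat N s (\<lambda>(i, j). Y (i, j) \<omega>)"
    have Ymc: "Ym \<in> carrier_mat N s" unfolding Ym_def by simp
    have "(\<lambda>(i, j). Y (i, j) \<omega>) = (\<lambda>ij. Y ij \<omega>)" by auto
    then have Ym2: "Ym = mat N s (\<lambda>ij. Y ij \<omega>)" unfolding Ym_def by simp
    have dt: "det (C * Q * Ym) \<noteq> 0" using nz fdet_eval[OF Hc, of "\<lambda>ij. Y ij \<omega>"] unfolding I0_def Ym2 H_def by simp
    have P: "riesz_proj \<Gamma> N A = S * (B * C) * Q" unfolding riesz BC ..
    have res: "vec_space.rank N (riesz_proj \<Gamma> N A * Ym) = s \<and>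
        invertible_mat (mat_adjoint (riesz_proj \<Gamma> N A * Ym) * A * (riesz_proj \<Gamma> N A * Ym)) \<and>
        char_poly ((1\<^sub>m N - A * (riesz_proj \<Gamma> N A * Ym) * mat_inv (mat_adjoint (riesz_proj \<Gamma> N A * Ym) * A * (riesz_proj \<Gamma> N A * Ym)) * mat_adjoint (riesz_proj \<Gamma> N A * Ym)) * A)
        = char_poly (J - B * C * J)"
      by (rule main_alg[OF A nonsing S Q Jc SQ QS AJ Bc Cc CB DJ Ymc dt P refl])
    show "let Ym = mat N s (\<lambda>(i, j). Y (i, j) \<omega>); Z = riesz_proj \<Gamma> N A * Ym; ZH = mat_adjoint Z
      in vec_space.rank N Z = s \<and> invertible_mat (ZH * A * Z) \<and>
         char_poly ((1\<^sub>m N - A * Z * mat_inv (ZH * A * Z) * ZH) * A) =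
         monom 1 s * (\<Prod>(n, a)\<leftarrow>filter (\<lambda>(n, a). a \<in> outside (path_image \<Gamma>)) n_as. [:- a, 1:] ^ n)"
      unfolding Let_def Ym_def[symmetric] using res charJ unfolding out_def by simp
  qed
qed


end
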